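(* Let $p\geq 1$ be fixed and define $\phi_p:\mathbb{R}\to[0,\infty)$ by $\phi_p(t)=|t|$ if $|t|\leq 1$ and $\phi_p(t)=|t|^p$ otherwise. Then: (i) $\mathscr{P}_p(\mathbb{R})=\mathcal{M}_1^{\phi_p}\;(=\mathcal{M}_1^p)$; (ii) $\mathsf{d}_{\phi_p}(P,Q)\leq \sqrt{\mathsf{d}_{FM,p}(P,Q)}+p\,\mathsf{d}_{FM,p}(P,Q)$ for all $P,Q\in\mathscr{P}_p(\mathbb{R})$; (iii) $\mathsf{d}_{FM,p}$ metrizes the $\phi_p$-weak topology on $\mathscr{P}_p(\mathbb{R})$.
   Context: $\mathscr{P}(\mathbb{R})$ is the set of Borel probability measures on $\mathbb{R}$; for $P\in\mathscr{P}(\mathbb{R})$ write also $P(x)=P((-\infty,x])$. For $p\geq 1$ let $c_p(\xi,\tilde\xi)=\max\{1,|\xi|,|\tilde\xi|\}^{p-1}$ and let $\mathcal{F}_p(\mathbb{R})$ be the set of functions $\psi:\mathbb{R}\to\mathbb{R}$ with $|\psi(\xi)-\psi(\tilde\xi)|\leq c_p(\xi,\tilde\xi)|\xi-\tilde\xi|$ for all $\xi,\tilde\xi\in\mathbb{R}$. The $p$-th order Fortet–Mourier metric is $\mathsf{d}_{FM,p}(P,Q)=\sup_{\psi\in\mathcal{F}_p(\mathbb{R})}\left|\int\psi\,dP-\int\psi\,dQ\right|$ (possibly $+\infty$), and $\mathscr{P}_p(\mathbb{R})=\{P\in\mathscr{P}(\mathbb{R}):\mathsf{d}_{FM,p}(P,\delta_0)<+\infty\}$,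 where $\delta_0$ is the Dirac measure at $0$. For a continuous $\phi:\mathbb{R}\to[0,\infty)$, $\mathcal{M}_1^\phi=\{P\in\mathscr{P}(\mathbb{R}):\int\phi\,dP<\infty\}$ and $\mathcal{M}_1^p=\mathcal{M}_1^{|\cdot|^p}$. For a gauge function $\phi$ (continuous, $\phi\geq1$ outside a compact set), the $\phi$-weak topology on $\mathcal{M}_1^\phi$ is the coarsest topology making $P\mapsto\int h\,dP$ continuous for every continuous $h$ with $|h(t)|\leq c(\phi(t)+1)$ for some constant $c>0$. The metric $\mathsf{d}_\phi$ on $\mathcal{M}_1^\phi$ is $\mathsf{d}_\phi(P,Q)=\mathsf{d}_{\mathrm{Prok}}(P,Q)+\left|\int\phi\,dP-\int\phi\,dQ\right|$, where $\mathsf{d}_{\mathrm{Prok}}(P,Q)=\inf\{\epsilon>0: P(A)\leq Q(A^\epsilon)+\epsilon\ \forall A\in\mathcal{B}(\mathbb{R})\}$ is the Prokhorov metric, with $A^\epsilon$ the open $\epsilon$-neighbourhood of $A$. *)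

theory Defs
  imports "HOL-Analysis.Analysis" "HOL-Probability.Probability"
begin

definition prob_real :: "real measure \<Rightarrow> bool" where
  "prob_real P \<longleftrightarrow> prob_space P \<and> sets P = sets borel"

definition cp :: "real \<Rightarrow> real \<Rightarrow> real \<Rightarrow> real" where
  "cp p x y = (max 1 (max \<bar>x\<bar> \<bar>y\<bar>)) powr (p - 1)"

definition Fp :: "real \<Rightarrow> (real \<Rightarrow> real) set" where
  "Fp p = {\<psi>. \<forall>x y. \<bar>\<psi> x - \<psi> y\<bar> \<le> cp p x y * \<bar>x - y\<bar>}"

text \<open>Fortet--Mourier metric, valued in the extended reals. Convention: a test function
  that is not integrable with respect to P or Q contributes the value infinity.\<close>
definition dFM :: "real \<Rightarrow> real measure \<Rightarrow> real measure \<Rightarrow> ereal" where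
  "dFM p P Q = (SUP \<psi>\<in>Fp p.
      (if integrable P \<psi> \<and> integrable Q \<psi>
       then ereal \<bar>(\<integral>x. \<psi> x \<partial>P) - (\<integral>x. \<psi> x \<partial>Q)\<bar> else \<infinity>))"

definition Pp :: "real \<Rightarrow> real measure set" where
  "Pp p = {P. prob_real P \<and> dFM p P (return borel 0) < \<infinity>}"

definition M1 :: "(real \<Rightarrow> real) \<Rightarrow> real measure set" where
  "M1 \<phi> = {P. prob_real P \<and> (\<integral>\<^sup>+x. ennreal (\<phi> x) \<partial>P) < \<infinity>}"

definition phip :: "real \<Rightarrow> real \<Rightarrow> real" where
  "phip p t = (if \<bar>t\<bar> \<le> 1 then \<bar>t\<bar> else \<bar>t\<bar> powr p)"

definition nbhd :: "real set \<Rightarrow> real \<Rightarrow> real set" where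
  "nbhd A \<epsilon> = {x. \<exists>a\<in>A. dist x a < \<epsilon>}"

definition dProk :: "real measure \<Rightarrow> real measure \<Rightarrow> real" where
  "dProk P Q = Inf {\<epsilon>. \<epsilon> > 0 \<and> (\<forall>A\<in>sets borel. measure P A \<le> measure Q (nbhd A \<epsilon>) + \<epsilon>)}"

definition dphi :: "(real \<Rightarrow> real) \<Rightarrow> real measure \<Rightarrow> real measure \<Rightarrow> real" where
  "dphi \<phi> P Q = dProk P Q + \<bar>(\<integral>x. \<phi> x \<partial>P) - (\<integral>x. \<phi> x \<partial>Q)\<bar>"

definition phi_weak_topology :: "(real \<Rightarrow> real) \<Rightarrow> real measure topology" where
  "phi_weak_topology \<phi> = topology_generated_by
     {{P \<in> M1 \<phi>. (\<integral>x. h x \<partial>P) \<in> V} | h V.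
        continuous_on UNIV h \<and> (\<exists>c>0. \<forall>t. \<bar>h t\<bar> \<le> c * (\<phi> t + 1)) \<and> open V}"

end

theory Submission
  imports Defs
begin


lemma cp_ge1: assumes "p \<ge> 1" shows "cp p x y \<ge> 1"
  unfolding cp_def by (rule ge_one_powr_ge_zero) (use assms in auto)

lemma cp_le: assumes "p \<ge> 1" "\<bar>x\<bar> \<le> B" "\<bar>y\<bar> \<le> B" "B \<ge> 1"
  shows "cp p x y \<le> B powr (p - 1)"
  unfolding cp_def by (rule powr_mono2) (use assms in auto)

lemma cp_nonneg: "cp p x y \<ge> 0" unfolding cp_def by simp

lemma FpD: "\<psi> \<in> Fp p \<Longrightarrow> \<bar>\<psi> x - \<psi> y\<bar> \<le> cp p x y * \<bar>x - y\<bar>"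
  unfolding Fp_def by auto

lemma Fp_cont: assumes "p \<ge> 1" "\<psi> \<in> Fp p" shows "continuous_on UNIV \<psi>"
proof (rule continuous_at_imp_continuous_on, intro ballI)
  fix x :: real
  let ?B = "\<bar>x\<bar> + 1"
  have "(?B powr (p-1))-lipschitz_on (cball x 1) \<psi>"
  proof (rule lipschitz_onI)
    fix y z assume yz: "y \<in> cball x 1" "z \<in> cball x 1"
    have "\<bar>y\<bar> \<le> ?B" "\<bar>z\<bar> \<le> ?B" using yz by (auto simp: dist_real_def)
    then have "cp p y z \<le> ?B powr (p-1)" using cp_le[OF assms(1)] by auto
    then have "\<bar>\<psi> y - \<psi> z\<bar> \<le> ?B powr (p-1) * \<bar>y - z\<bar>"
      using FpD[OF assms(2), of y z] by (meson abs_ge_zero mult_right_mono order_trans)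
    then show "dist (\<psi> y) (\<psi> z) \<le> ?B powr (p-1) * dist y z" by (simp add: dist_real_def)
  qed simp
  then have "continuous_on (cball x 1) \<psi>" by (rule lipschitz_on_continuous_on)
  then show "isCont \<psi> x" by (rule continuous_on_interior) simp
qed

lemma phip_nonneg: "phip p t \<ge> 0" unfolding phip_def by auto

lemma Fp_phi: assumes "p \<ge> 1" "\<psi> \<in> Fp p" shows "\<bar>\<psi> x - \<psi> 0\<bar> \<le> phip p x"
proof -
  have "\<bar>\<psi> x - \<psi> 0\<bar> \<le> cp p x 0 * \<bar>x\<bar>" using FpD[OF assms(2), of x 0] by simp
  also have "cp p x 0 * \<bar>x\<bar> = phip p x"
  proof (cases "\<bar>x\<bar> \<le> 1")
    case True then show ?thesis by (simp add: cp_def phip_def max_def)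
  next
    case False
    then have "cp p x 0 = \<bar>x\<bar> powr (p - 1)" by (simp add: cp_def max_def)
    moreover have "\<bar>x\<bar> powr (p - 1 + 1) = \<bar>x\<bar> powr (p - 1) * \<bar>x\<bar> powr 1"
      by (rule powr_add)
    moreover have "\<bar>x\<bar> powr 1 = \<bar>x\<bar>" by simp
    ultimately show ?thesis using False by (simp add: phip_def)
  qed
  finally show ?thesis .
qed

lemma powr_diff_bound:
  fixes a b p :: real
  assumes "p \<ge> 1" "0 < a" "a \<le> b"
  shows "b powr p - a powr p \<le> p * b powr (p - 1) * (b - a)"
proof (cases "a = b")
  case True then show ?thesis by simp
next
  case False
  then have ab: "a < b" using assms by simp
  obtain z where z: "z > a" "z < b" "b powr p - a powr p = (b - a) * (p * z powr (p - 1))"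
    using MVT2[OF ab, of "\<lambda>z. z powr p" "\<lambda>z. p * z powr (p - 1)"] has_real_derivative_powr assms
    by force
  have "z powr (p - 1) \<le> b powr (p - 1)" by (rule powr_mono2) (use z assms in auto)
  then have "(b - a) * (p * z powr (p - 1)) \<le> (b - a) * (p * b powr (p - 1))"
    using ab assms by (intro mult_left_mono) auto
  then show ?thesis using z by (simp add: algebra_simps)
qed

lemma phip_abs: "phip p t = phip p \<bar>t\<bar>" unfolding phip_def by simp

lemma phip_lip_nonneg:
  fixes a b p :: real
  assumes "p \<ge> 1" "0 \<le> a" "a \<le> b"
  shows "phip p b - phip p a \<le> p * (max 1 b) powr (p - 1) * (b - a)"
proof -
  have pb: "(max 1 b) powr (p-1) \<ge> 1" by (rule ge_one_powr_ge_zero) (use assms in auto)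
  show ?thesis
  proof (cases "b \<le> 1")
    case True
    then have "phip p b - phip p a = b - a" using assms by (simp add: phip_def)
    also have "\<dots> \<le> 1 * (b - a)" by simp
    also have "\<dots> \<le> (p * (max 1 b) powr (p - 1)) * (b - a)"
      using assms pb by (intro mult_right_mono) (auto intro: order_trans[OF _ mult_mono[of 1 p 1]])
    finally show ?thesis by simp
  next
    case False
    then have mb: "max 1 b = b" by simp
    show ?thesis
    proof (cases "a \<le> 1")
      case True
      have "b powr p - 1 powr p \<le> p * b powr (p - 1) * (b - 1)"
        by (rule powr_diff_bound) (use assms False in auto)
      moreover have "1 - a \<le> p * b powr (p - 1) * (1 - a)"
      proof -
        have h1: "1 \<le> p * b powr (p-1)" using pb mb assms mult_mono[of 1 p 1 "b powr (p-1)"]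
          by simp
        show ?thesis using True mult_right_mono[OF h1, of "1 - a"] by simp
      qed
      moreover have "p * b powr (p - 1) * (b - 1) + p * b powr (p - 1) * (1 - a) = p * b powr (p - 1) * (b - a)"
        by (simp add: algebra_simps)
      moreover have "phip p b = b powr p" "phip p a = a" using True False assms by (auto simp: phip_def)
      ultimately show ?thesis using mb by simp
    next
      case False2: False
      have "b powr p - a powr p \<le> p * b powr (p - 1) * (b - a)"
        by (rule powr_diff_bound) (use assms False2 in auto)
      then show ?thesis using False False2 assms mb by (simp add: phip_def)
    qed
  qed
qed

lemma phip_mono: assumes "p \<ge> 1" "0 \<le> a" "a \<le> b" shows "phip p a \<le> phip p b"
proof (cases "b \<le> 1")
  case True then show ?thesis using assms by (simp add: phip_def)
next
  case False
  show ?thesis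
  proof (cases "a \<le> 1")
    case True
    have "1 \<le> b powr p" by (rule ge_one_powr_ge_zero) (use False assms in auto)
    then show ?thesis using True False assms by (simp add: phip_def)
  next
    case False2: False
    have "a powr p \<le> b powr p" by (rule powr_mono2) (use assms in auto)
    then show ?thesis using False False2 assms by (simp add: phip_def)
  qed
qed

lemma phip_lip:
  assumes "p \<ge> 1"
  shows "\<bar>phip p x - phip p y\<bar> \<le> p * cp p x y * \<bar>x - y\<bar>"
proof -
  have key: "\<bar>phip p x - phip p y\<bar> \<le> p * cp p x y * \<bar>x - y\<bar>" if le: "\<bar>y\<bar> \<le> \<bar>x\<bar>" for x y
  proof -
    have "phip p \<bar>x\<bar> - phip p \<bar>y\<bar> \<le> p * (max 1 \<bar>x\<bar>) powr (p - 1) * (\<bar>x\<bar> - \<bar>y\<bar>)"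
      by (rule phip_lip_nonneg) (use assms le in auto)
    moreover have "phip p \<bar>y\<bar> \<le> phip p \<bar>x\<bar>"
      using phip_mono[OF assms, of "\<bar>y\<bar>" "\<bar>x\<bar>"] le by simp
    moreover have "max 1 \<bar>x\<bar> = max 1 (max \<bar>x\<bar> \<bar>y\<bar>)" using le by auto
    moreover have "\<bar>x\<bar> - \<bar>y\<bar> \<le> \<bar>x - y\<bar>" by simp
    moreover have "p * (max 1 \<bar>x\<bar>) powr (p - 1) \<ge> 0" using assms by simp
    moreover have "max 1 (max \<bar>x\<bar> \<bar>y\<bar>) powr (p - 1) = cp p x y" by (simp add: cp_def)
    ultimately have "0 \<le> phip p x - phip p y \<and> phip p x - phip p y \<le> p * cp p x y * \<bar>x - y\<bar>"
      by (smt (verit) phip_abs mult_left_mono)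
    then show ?thesis by simp
  qed
  show ?thesis
  proof (cases "\<bar>y\<bar> \<le> \<bar>x\<bar>")
    case True then show ?thesis by (rule key)
  next
    case False
    then have "\<bar>phip p y - phip p x\<bar> \<le> p * cp p y x * \<bar>y - x\<bar>" by (intro key) auto
    then show ?thesis by (simp add: cp_def abs_minus_commute max.commute)
  qed
qed

lemma phip_Fp: assumes "p \<ge> 1" shows "(\<lambda>t. phip p t / p) \<in> Fp p"
  unfolding Fp_def
proof (safe)
  fix x y
  have "\<bar>phip p x / p - phip p y / p\<bar> = \<bar>phip p x - phip p y\<bar> / p"
    using assms by (simp add: diff_divide_distrib[symmetric])
  also have "\<dots> \<le> (p * cp p x y * \<bar>x - y\<bar>) / p"
    using phip_lip[OF assms] assms by (intro divide_right_mono) auto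
  finally show "\<bar>phip p x / p - phip p y / p\<bar> \<le> cp p x y * \<bar>x - y\<bar>" using assms by simp
qed

lemma lip_Fp:
  assumes "p \<ge> 1" "L > 0" "\<And>x y. \<bar>f x - f y\<bar> \<le> L * \<bar>x - y\<bar>"
  shows "(\<lambda>x. f x / L) \<in> Fp p"
  unfolding Fp_def
proof (safe)
  fix x y
  have "\<bar>f x / L - f y / L\<bar> = \<bar>f x - f y\<bar> / L"
    using assms by (simp add: diff_divide_distrib[symmetric])
  also have "\<dots> \<le> \<bar>x - y\<bar>" using assms(2) assms(3)[of x y] by (simp add: divide_le_eq mult.commute)
  also have "\<dots> \<le> cp p x y * \<bar>x - y\<bar>" using cp_ge1[OF assms(1), of x y] mult_right_mono[of 1 "cp p x y" "\<bar>x - y\<bar>"] by simp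
  finally show "\<bar>f x / L - f y / L\<bar> \<le> cp p x y * \<bar>x - y\<bar>" .
qed

lemma phip_cont: assumes "p \<ge> 1" shows "continuous_on UNIV (phip p)"
proof -
  have "continuous_on UNIV (\<lambda>t. p * (phip p t / p))"
    by (intro continuous_intros Fp_cont[OF assms phip_Fp[OF assms]])
  then show ?thesis using assms by simp
qed

lemma phip_le_pow: "phip p t \<le> \<bar>t\<bar> powr p + 1"
proof (cases "\<bar>t\<bar> \<le> 1")
  case True
  have h: "0 \<le> \<bar>t\<bar> powr p" by simp
  have "phip p t = \<bar>t\<bar>" using True by (simp add: phip_def)
  then show ?thesis using True h by linarith
qed (simp add: phip_def)
lemma pow_le_phip: assumes "p \<ge> 1" shows "\<bar>t\<bar> powr p \<le> phip p t + 1"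
proof (cases "\<bar>t\<bar> \<le> 1")
  case True
  then have "\<bar>t\<bar> powr p \<le> 1"
    using powr_le1[of p "\<bar>t\<bar>"] assms by simp
  then show ?thesis using True phip_nonneg[of p t] by linarith
qed (simp add: phip_def)



lemma M1D: assumes "P \<in> M1 \<phi>"
  shows "prob_space P" "sets P = sets borel" "(\<integral>\<^sup>+x. ennreal (\<phi> x) \<partial>P) < \<infinity>"
  using assms by (auto simp: M1_def prob_real_def)

lemma space_M1: assumes "P \<in> M1 \<phi>" shows "space P = UNIV"
  using sets_eq_imp_space_eq[OF M1D(2)[OF assms]] by simp

lemma meas_P: "sets P = sets borel \<Longrightarrow> f \<in> borel_measurable borel \<Longrightarrow> f \<in> borel_measurable P"
  using measurable_cong_sets[of P borel borel borel] by simp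

lemma cont_meas: "continuous_on UNIV f \<Longrightarrow> sets P = sets borel \<Longrightarrow> (f::real\<Rightarrow>real) \<in> borel_measurable P"
  by (rule meas_P) (auto intro: borel_measurable_continuous_onI)

lemma M1_int_phi: assumes "p \<ge> 1" "P \<in> M1 (phip p)" shows "integrable P (phip p)"
  unfolding integrable_iff_bounded
proof
  show "phip p \<in> borel_measurable P" using cont_meas[OF phip_cont[OF assms(1)] M1D(2)[OF assms(2)]] .
  have "(\<integral>\<^sup>+x. ennreal (norm (phip p x)) \<partial>P) = (\<integral>\<^sup>+x. ennreal (phip p x) \<partial>P)"
    using phip_nonneg by simp
  then show "(\<integral>\<^sup>+x. ennreal (norm (phip p x)) \<partial>P) < \<infinity>" using M1D(3)[OF assms(2)] by simp
qed

lemma M1_int_dom: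
  assumes "p \<ge> 1" "P \<in> M1 (phip p)" "g \<in> borel_measurable P" "\<And>t. \<bar>g t\<bar> \<le> c * (phip p t + 1)"
  shows "integrable P g"
proof -
  interpret prob_space P using M1D(1)[OF assms(2)] .
  have "integrable P (\<lambda>t. c * (phip p t + 1))"
    using M1_int_phi[OF assms(1,2)] by (intro integrable_mult_right integrable_add) auto
  moreover have "AE x in P. norm (g x) \<le> norm (c * (phip p x + 1))"
    using assms(4) by (auto intro: order_trans abs_ge_self)
  ultimately show ?thesis using Bochner_Integration.integrable_bound assms(3) by blast
qed

lemma Fp_int: assumes "p \<ge> 1" "P \<in> M1 (phip p)" "\<psi> \<in> Fp p" shows "integrable P \<psi>"
proof (rule M1_int_dom[OF assms(1,2), of _ "\<bar>\<psi> 0\<bar> + 1"])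
  show "\<psi> \<in> borel_measurable P" using cont_meas[OF Fp_cont[OF assms(1,3)] M1D(2)[OF assms(2)]] .
  fix t
  have "\<bar>\<psi> t\<bar> \<le> \<bar>\<psi> 0\<bar> + phip p t" using Fp_phi[OF assms(1,3), of t] by linarith
  also have "\<dots> \<le> (\<bar>\<psi> 0\<bar> + 1) * (phip p t + 1)"
    using phip_nonneg[of p t] by (simp add: algebra_simps)
  finally show "\<bar>\<psi> t\<bar> \<le> (\<bar>\<psi> 0\<bar> + 1) * (phip p t + 1)" .
qed

lemma Fp_center: assumes "p \<ge> 1" "P \<in> M1 (phip p)" "\<psi> \<in> Fp p"
  shows "\<bar>(\<integral>x. \<psi> x \<partial>P) - \<psi> 0\<bar> \<le> (\<integral>x. phip p x \<partial>P)"
proof -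
  interpret prob_space P using M1D(1)[OF assms(2)] .
  have i: "integrable P \<psi>" using Fp_int[OF assms] .
  have "(\<integral>x. \<psi> x \<partial>P) - \<psi> 0 = (\<integral>x. \<psi> x - \<psi> 0 \<partial>P)"
    using i by (simp add: prob_space)
  also have "\<bar>\<dots>\<bar> \<le> (\<integral>x. phip p x \<partial>P)"
    using i M1_int_phi[OF assms(1,2)] Fp_phi[OF assms(1,3)]
    by (intro integral_abs_bound_integral) auto
  finally show ?thesis .
qed

lemma Fp_bound: assumes "p \<ge> 1" "P \<in> M1 (phip p)" "Q \<in> M1 (phip p)" "\<psi> \<in> Fp p"
  shows "\<bar>(\<integral>x. \<psi> x \<partial>P) - (\<integral>x. \<psi> x \<partial>Q)\<bar> \<le> (\<integral>x. phip p x \<partial>P) + (\<integral>x. phip p x \<partial>Q)"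
  using Fp_center[OF assms(1,2,4)] Fp_center[OF assms(1,3,4)] by linarith

lemma zero_Fp: "(\<lambda>x. 0) \<in> Fp p" unfolding Fp_def using cp_nonneg by auto

lemma dFM_nonneg: "0 \<le> dFM p P Q"
  unfolding dFM_def by (rule SUP_upper2[OF zero_Fp]) auto

lemma dFM_sym: "dFM p P Q = dFM p Q P"
  unfolding dFM_def by (intro SUP_cong refl) (auto simp: abs_minus_commute)

lemma dFM_upper: assumes "p \<ge> 1" "P \<in> M1 (phip p)" "Q \<in> M1 (phip p)" "\<psi> \<in> Fp p"
  shows "ereal \<bar>(\<integral>x. \<psi> x \<partial>P) - (\<integral>x. \<psi> x \<partial>Q)\<bar> \<le> dFM p P Q"
  unfolding dFM_def by (rule SUP_upper2[OF assms(4)]) (use Fp_int[OF assms(1,2,4)] Fp_int[OF assms(1,3,4)] in auto)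

lemma dFM_least: assumes "p \<ge> 1" "P \<in> M1 (phip p)" "Q \<in> M1 (phip p)"
  "\<And>\<psi>. \<psi> \<in> Fp p \<Longrightarrow> \<bar>(\<integral>x. \<psi> x \<partial>P) - (\<integral>x. \<psi> x \<partial>Q)\<bar> \<le> B"
  shows "dFM p P Q \<le> ereal B"
  unfolding dFM_def
proof (rule SUP_least)
  fix \<psi> assume "\<psi> \<in> Fp p"
  then show "(if integrable P \<psi> \<and> integrable Q \<psi> then ereal \<bar>(\<integral>x. \<psi> x \<partial>P) - (\<integral>x. \<psi> x \<partial>Q)\<bar> else \<infinity>) \<le> ereal B"
    using Fp_int[OF assms(1,2)] Fp_int[OF assms(1,3)] assms(4) by auto
qed

definition D :: "real \<Rightarrow> real measure \<Rightarrow> real measure \<Rightarrow> real" where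
  "D p P Q = real_of_ereal (dFM p P Q)"

lemma dFM_fin: assumes "p \<ge> 1" "P \<in> M1 (phip p)" "Q \<in> M1 (phip p)"
  shows "dFM p P Q = ereal (D p P Q)" "dFM p P Q < \<infinity>"
proof -
  have "dFM p P Q \<le> ereal ((\<integral>x. phip p x \<partial>P) + (\<integral>x. phip p x \<partial>Q))"
    by (rule dFM_least[OF assms]) (rule Fp_bound[OF assms])
  then show "dFM p P Q < \<infinity>" by (auto simp: less_le_trans)
  then show "dFM p P Q = ereal (D p P Q)" using dFM_nonneg[of p P Q] unfolding D_def
    by (cases "dFM p P Q") auto
qed

lemma D_nonneg: "0 \<le> D p P Q" unfolding D_def using dFM_nonneg by (simp add: real_of_ereal_pos)

lemma D_upper: assumes "p \<ge> 1" "P \<in> M1 (phip p)" "Q \<in> M1 (phip p)" "\<psi> \<in> Fp p"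
  shows "\<bar>(\<integral>x. \<psi> x \<partial>P) - (\<integral>x. \<psi> x \<partial>Q)\<bar> \<le> D p P Q"
  using dFM_upper[OF assms] dFM_fin(1)[OF assms(1-3)] by simp

lemma D_least: assumes "p \<ge> 1" "P \<in> M1 (phip p)" "Q \<in> M1 (phip p)"
  "\<And>\<psi>. \<psi> \<in> Fp p \<Longrightarrow> \<bar>(\<integral>x. \<psi> x \<partial>P) - (\<integral>x. \<psi> x \<partial>Q)\<bar> \<le> B"
  shows "D p P Q \<le> B"
  using dFM_least[OF assms] dFM_fin(1)[OF assms(1-3)] by simp

lemma D_sym: "D p P Q = D p Q P" unfolding D_def using dFM_sym by metis

lemma return0_M1: assumes "p \<ge> 1" shows "return borel 0 \<in> M1 (phip p)"
proof -
  have m: "(\<lambda>x. ennreal (phip p x)) \<in> borel_measurable borel"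
    using borel_measurable_continuous_onI[OF phip_cont[OF assms]] by measurable
  show ?thesis
    unfolding M1_def prob_real_def
    using prob_space_return[of 0 borel] nn_integral_return[of 0 borel, OF _ m]
    by (simp add: phip_def)
qed

lemma M1_Pp: assumes "p \<ge> 1" "P \<in> M1 (phip p)" shows "P \<in> Pp p"
  using dFM_fin(2)[OF assms return0_M1[OF assms(1)]] assms(2)
  unfolding Pp_def M1_def by auto

lemma Pp_M1: assumes "p \<ge> 1" "P \<in> Pp p" shows "P \<in> M1 (phip p)"
proof (rule ccontr)
  assume nM: "P \<notin> M1 (phip p)"
  have pr: "prob_real P" using assms(2) by (simp add: Pp_def)
  have "\<not> integrable P (\<lambda>t. phip p t / p)"
  proof
    assume "integrable P (\<lambda>t. phip p t / p)"
    then have "integrable P (\<lambda>t. p * (phip p t / p))" by (rule integrable_mult_right)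
    moreover have "(\<lambda>t. p * (phip p t / p)) = phip p" using assms(1) by (auto simp: fun_eq_iff)
    ultimately have "integrable P (phip p)" by simp
    then have "(\<integral>\<^sup>+x. ennreal (norm (phip p x)) \<partial>P) < \<infinity>" by (simp add: integrable_iff_bounded)
    then have "(\<integral>\<^sup>+x. ennreal (phip p x) \<partial>P) < \<infinity>" using phip_nonneg by simp
    then show False using nM pr by (simp add: M1_def)
  qed
  note ni = this
  have "\<infinity> \<le> dFM p P (return borel 0)"
    unfolding dFM_def by (rule SUP_upper2[OF phip_Fp[OF assms(1)]]) (use ni in auto)
  then show False using assms(2) by (simp add: Pp_def)
qed

lemma Pp_eq: assumes "p \<ge> 1" shows "Pp p = M1 (phip p)"
  using Pp_M1[OF assms] M1_Pp[OF assms] by blast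

lemma M1_pow: assumes "p \<ge> 1" shows "M1 (phip p) = M1 (\<lambda>t. \<bar>t\<bar> powr p)"
proof -
  have key: "(\<integral>\<^sup>+x. ennreal (f x) \<partial>P) < \<infinity>"
    if pr: "prob_real P" and fin: "(\<integral>\<^sup>+x. ennreal (g x) \<partial>P) < \<infinity>"
      and le: "\<And>t. f t \<le> g t + 1" and gm: "g \<in> borel_measurable borel" and g0: "\<And>t. g t \<ge> 0"
    for P f g
  proof -
    interpret prob_space P using pr by (simp add: prob_real_def)
    have s: "sets P = sets borel" using pr by (simp add: prob_real_def)
    have gP: "g \<in> borel_measurable P" using meas_P[OF s gm] .
    have "(\<integral>\<^sup>+x. ennreal (f x) \<partial>P) \<le> (\<integral>\<^sup>+x. ennreal (g x) + 1 \<partial>P)"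
    proof (rule nn_integral_mono)
      fix x
      have "ennreal (f x) \<le> ennreal (g x + 1)" using le[of x] by (rule ennreal_leI)
      also have "\<dots> = ennreal (g x) + 1" using g0[of x] by (simp add: ennreal_plus)
      finally show "ennreal (f x) \<le> ennreal (g x) + 1" .
    qed
    also have "\<dots> = (\<integral>\<^sup>+x. ennreal (g x) \<partial>P) + (\<integral>\<^sup>+x. 1 \<partial>P)"
      using gP by (intro nn_integral_add) auto
    also have "\<dots> < \<infinity>" using fin by (simp add: emeasure_space_1)
    finally show ?thesis .
  qed
  have m1: "phip p \<in> borel_measurable borel" using borel_measurable_continuous_onI[OF phip_cont[OF assms]] .
  have m2: "(\<lambda>t. \<bar>t\<bar> powr p) \<in> borel_measurable borel" by measurable
  show ?thesis unfolding M1_def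
    using key[OF _ _ phip_le_pow m2] key[OF _ _ pow_le_phip[OF assms] m1] phip_nonneg by auto
qed



lemma nbhd_open: "open (nbhd A e)"
proof -
  have "nbhd A e = (\<Union>a\<in>A. ball a e)" by (auto simp: nbhd_def dist_commute)
  then show ?thesis by auto
qed

lemma prok_test:
  assumes "p \<ge> 1" "P \<in> M1 (phip p)" "Q \<in> M1 (phip p)" "A \<in> sets borel" "e > 0"
  shows "measure P A \<le> measure Q (nbhd A e) + D p P Q / e"
proof (cases "A = {}")
  case True
  then show ?thesis using D_nonneg[of p P Q] assms(5) by simp
next
  case ne: False
  interpret P: prob_space P using M1D(1)[OF assms(2)] .
  interpret Q: prob_space Q using M1D(1)[OF assms(3)] .
  have sP: "sets P = sets borel" and sQ: "sets Q = sets borel" using M1D(2) assms by auto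
  define \<psi> where "\<psi> t = max 0 (e - infdist t A)" for t
  have lip: "\<bar>\<psi> x - \<psi> y\<bar> \<le> 1 * \<bar>x - y\<bar>" for x y
  proof -
    have "\<bar>infdist x A - infdist y A\<bar> \<le> dist x y" by (rule infdist_triangle_abs)
    then show ?thesis unfolding \<psi>_def dist_real_def by (auto simp: abs_le_iff max_def split: if_splits)
  qed
  have "(\<lambda>x. \<psi> x / 1) \<in> Fp p" by (rule lip_Fp[OF assms(1) _ lip]) simp
  then have F: "\<psi> \<in> Fp p" by simp
  have iP: "integrable P \<psi>" and iQ: "integrable Q \<psi>" using Fp_int[OF assms(1) _ F] assms(2,3) by auto
  have nb: "nbhd A e \<in> sets borel" using nbhd_open by auto
  have "e * measure P A = (\<integral>x. e * indicator A x \<partial>P)"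
    using space_M1[OF assms(2)] by simp
  also have "\<dots> \<le> (\<integral>x. \<psi> x \<partial>P)"
  proof (rule integral_mono)
    show "integrable P (\<lambda>x. e * indicator A x)" using assms(4) sP
      by (intro integrable_mult_right integrable_real_indicator) (auto simp: less_top[symmetric] P.emeasure_finite)
    show "integrable P \<psi>" by fact
    fix x show "e * indicator A x \<le> \<psi> x"
      by (cases "x \<in> A") (auto simp: \<psi>_def)
  qed
  also have "\<dots> \<le> (\<integral>x. \<psi> x \<partial>Q) + D p P Q"
    using D_upper[OF assms(1,2,3) F] by linarith
  also have "(\<integral>x. \<psi> x \<partial>Q) \<le> (\<integral>x. e * indicator (nbhd A e) x \<partial>Q)"
  proof (rule integral_mono)
    show "integrable Q (\<lambda>x. e * indicator (nbhd A e) x)" using nb sQ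
      by (intro integrable_mult_right integrable_real_indicator) (auto simp: less_top[symmetric] Q.emeasure_finite)
    show "integrable Q \<psi>" by fact
    fix x show "\<psi> x \<le> e * indicator (nbhd A e) x"
    proof (cases "infdist x A < e")
      case True
      have "bdd_below ((\<lambda>a. dist x a) ` A)" by (auto intro: bdd_belowI2[of _ 0])
      then obtain a where "a \<in> A" "dist x a < e"
        using True ne by (auto simp: infdist_notempty cINF_less_iff)
      then have "x \<in> nbhd A e" by (auto simp: nbhd_def)
      then show ?thesis using infdist_nonneg[of x A] assms(5) by (auto simp: \<psi>_def)
    next
      case False
      then show ?thesis using assms(5) by (auto simp: \<psi>_def indicator_def)
    qed
  qed
  also have "(\<integral>x. e * indicator (nbhd A e) x \<partial>Q) = e * measure Q (nbhd A e)"
    using space_M1[OF assms(3)] by simp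
  finally have "e * measure P A \<le> e * measure Q (nbhd A e) + D p P Q" by simp
  then have "measure P A \<le> (e * measure Q (nbhd A e) + D p P Q) / e"
    using assms(5) by (simp add: le_divide_eq mult.commute)
  also have "\<dots> = measure Q (nbhd A e) + D p P Q / e"
    using assms(5) by (simp add: add_divide_distrib)
  finally show ?thesis .
qed

lemma prok_bound:
  assumes "p \<ge> 1" "P \<in> M1 (phip p)" "Q \<in> M1 (phip p)"
  shows "dProk P Q \<le> sqrt (D p P Q)"
proof -
  define E where "E = {\<epsilon>. \<epsilon> > 0 \<and> (\<forall>A\<in>sets borel. measure P A \<le> measure Q (nbhd A \<epsilon>) + \<epsilon>)}"
  have bdd: "bdd_below E" unfolding E_def by (rule bdd_belowI[of _ 0]) auto
  have inE: "e \<in> E" if "sqrt (D p P Q) < e" for e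
  proof -
    have e0: "e > 0" using that real_sqrt_ge_zero[OF D_nonneg[of p P Q]] by linarith
    have "sqrt (D p P Q) * sqrt (D p P Q) < e * e"
      using that e0 D_nonneg[of p P Q] by (intro mult_strict_mono) auto
    then have "D p P Q < e * e" using D_nonneg[of p P Q] by simp
    then have de: "D p P Q / e \<le> e" using e0 by (simp add: divide_le_eq)
    have "measure P A \<le> measure Q (nbhd A e) + e" if "A \<in> sets borel" for A
      using prok_test[OF assms that e0] de by linarith
    then show ?thesis unfolding E_def using e0 by auto
  qed
  have "Inf E \<le> sqrt (D p P Q)"
  proof (rule dense_ge)
    fix e assume "sqrt (D p P Q) < e"
    then show "Inf E \<le> e" using cInf_lower[OF inE bdd] by simp
  qed
  then show ?thesis unfolding dProk_def E_def by simp
qed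

lemma phi_bound:
  assumes "p \<ge> 1" "P \<in> M1 (phip p)" "Q \<in> M1 (phip p)"
  shows "\<bar>(\<integral>x. phip p x \<partial>P) - (\<integral>x. phip p x \<partial>Q)\<bar> \<le> p * D p P Q"
proof -
  have "\<bar>(\<integral>x. phip p x / p \<partial>P) - (\<integral>x. phip p x / p \<partial>Q)\<bar> \<le> D p P Q"
    by (rule D_upper[OF assms phip_Fp[OF assms(1)]])
  then have "\<bar>(\<integral>x. phip p x \<partial>P) - (\<integral>x. phip p x \<partial>Q)\<bar> / p \<le> D p P Q"
    using assms(1) by (simp add: diff_divide_distrib[symmetric])
  then show ?thesis using assms(1) by (simp add: divide_le_eq mult.commute)
qed

lemma part2:
  assumes "p \<ge> 1" "P \<in> M1 (phip p)" "Q \<in> M1 (phip p)"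
  shows "dphi (phip p) P Q \<le> sqrt (D p P Q) + p * D p P Q"
  unfolding dphi_def using prok_bound[OF assms] phi_bound[OF assms] by linarith

lemma real_dist_M1: "P \<in> M1 \<phi> \<Longrightarrow> real_distribution P"
  unfolding real_distribution_def real_distribution_axioms_def using M1D by blast

lemma D_zero_eq:
  assumes "p \<ge> 1" "P \<in> M1 (phip p)" "Q \<in> M1 (phip p)" "D p P Q = 0"
  shows "P = Q"
proof -
  have half: "cdf P x \<le> cdf Q x" if "P \<in> M1 (phip p)" "Q \<in> M1 (phip p)" "D p P Q = 0" for P Q x
  proof -
    interpret Q: real_distribution Q using real_dist_M1[OF that(2)] .
    have ev: "\<forall>\<^sub>F y in at_right x. cdf P x \<le> cdf Q y"
    proof (rule eventually_at_rightI[of x "x + 1"])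
      fix y assume y: "y \<in> {x<..<x+1}"
      have "cdf P x = measure P {..x}" by (simp add: cdf_def)
      also have "\<dots> \<le> measure Q (nbhd {..x} (y - x)) + D p P Q / (y - x)"
        using y by (intro prok_test[OF assms(1) that(1,2)]) auto
      also have "\<dots> = measure Q (nbhd {..x} (y - x))" using that(3) by simp
      also have "\<dots> \<le> measure Q {..y}"
        by (rule Q.finite_measure_mono) (auto simp: nbhd_def dist_real_def)
      finally show "cdf P x \<le> cdf Q y" by (simp add: cdf_def)
    qed simp
    have "(cdf Q \<longlongrightarrow> cdf Q x) (at_right x)"
      using Q.cdf_is_right_cont[of x] by (simp add: continuous_within)
    then show ?thesis using ev by (rule tendsto_lowerbound) simp
  qed
  have "cdf P = cdf Q"
  proof
    fix x
    show "cdf P x = cdf Q x"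
      using half[OF assms(2,3,4)] half[OF assms(3,2)] assms(4) D_sym[of p P Q]
      by (metis order.antisym)
  qed
  then show ?thesis using cdf_unique real_dist_M1 assms(2,3) by blast
qed

lemma D_refl: assumes "p \<ge> 1" "P \<in> M1 (phip p)" shows "D p P P = 0"
  using D_least[OF assms assms(2), of 0] D_nonneg[of p P P] by simp

lemma D_triangle:
  assumes "p \<ge> 1" "P \<in> M1 (phip p)" "Q \<in> M1 (phip p)" "R \<in> M1 (phip p)"
  shows "D p P R \<le> D p P Q + D p Q R"
proof (rule D_least[OF assms(1,2,4)])
  fix \<psi> assume F: "\<psi> \<in> Fp p"
  show "\<bar>(\<integral>x. \<psi> x \<partial>P) - (\<integral>x. \<psi> x \<partial>R)\<bar> \<le> D p P Q + D p Q R"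
    using D_upper[OF assms(1,2,3) F] D_upper[OF assms(1,3,4) F] by linarith
qed

lemma metric_D: assumes "p \<ge> 1" shows "Metric_space (M1 (phip p)) (D p)"
proof
  fix x y show "0 \<le> D p x y" by (rule D_nonneg)
  show "D p x y = D p y x" by (rule D_sym)
next
  fix x y assume "x \<in> M1 (phip p)" "y \<in> M1 (phip p)"
  then show "(D p x y = 0) = (x = y)" using D_zero_eq[OF assms] D_refl[OF assms] by blast
next
  fix x y z assume "x \<in> M1 (phip p)" "y \<in> M1 (phip p)" "z \<in> M1 (phip p)"
  then show "D p x z \<le> D p x y + D p y z" using D_triangle[OF assms] by blast
qed



definition xg :: "real \<Rightarrow> real \<Rightarrow> nat \<Rightarrow> real" where "xg a \<eta> j = a + real j * \<eta>"
definition Hs :: "real \<Rightarrow> real \<Rightarrow> nat \<Rightarrow> real \<Rightarrow> real" where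
  "Hs a \<eta> j x = max 0 (min 1 ((x - xg a \<eta> j) / \<eta> + 1))"
definition Lam :: "real \<Rightarrow> real \<Rightarrow> nat \<Rightarrow> real \<Rightarrow> real" where
  "Lam a \<eta> j x = Hs a \<eta> j x - Hs a \<eta> (Suc j) x"

lemma Hs_bounds: "0 \<le> Hs a \<eta> j x" "Hs a \<eta> j x \<le> 1" unfolding Hs_def by auto

lemma Hs_Suc_arg: assumes "\<eta> > 0"
  shows "(x - xg a \<eta> (Suc j)) / \<eta> + 1 = (x - xg a \<eta> j) / \<eta>"
  using assms by (simp add: xg_def field_simps)

lemma Hs_mono: assumes "\<eta> > 0" shows "Hs a \<eta> (Suc j) x \<le> Hs a \<eta> j x"
proof -
  have "(x - xg a \<eta> j) / \<eta> \<le> (x - xg a \<eta> j) / \<eta> + 1" by simp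
  then show ?thesis unfolding Hs_def Hs_Suc_arg[OF assms] by (auto simp: max_def min_def)
qed

lemma Lam_nonneg: "\<eta> > 0 \<Longrightarrow> 0 \<le> Lam a \<eta> j x" unfolding Lam_def using Hs_mono by simp
lemma Lam_le1: "\<eta> > 0 \<Longrightarrow> Lam a \<eta> j x \<le> 1" unfolding Lam_def using Hs_bounds[of a \<eta>] by smt

lemma Lam_zero: assumes "\<eta> > 0" "\<bar>x - xg a \<eta> j\<bar> \<ge> \<eta>" shows "Lam a \<eta> j x = 0"
proof (cases "x \<le> xg a \<eta> j")
  case True
  then have "x - xg a \<eta> j \<le> - \<eta>" using assms by linarith
  then have "(x - xg a \<eta> j) / \<eta> \<le> -1" using assms by (simp add: divide_le_eq)
  then have "Hs a \<eta> j x = 0" and "Hs a \<eta> (Suc j) x = 0"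
    using Hs_mono[OF assms(1), of a j x] Hs_bounds[of a \<eta> "Suc j" x] unfolding Hs_def by auto
  then show ?thesis by (simp add: Lam_def)
next
  case False
  then have "x - xg a \<eta> j \<ge> \<eta>" using assms by linarith
  then have "(x - xg a \<eta> j) / \<eta> \<ge> 1" using assms by (simp add: le_divide_eq)
  then have "Hs a \<eta> (Suc j) x = 1"
    unfolding Hs_def Hs_Suc_arg[OF assms(1)] by auto
  moreover then have "Hs a \<eta> j x = 1"
    using Hs_mono[OF assms(1), of a j x] Hs_bounds[of a \<eta> j x] by auto
  ultimately show ?thesis by (simp add: Lam_def)
qed

lemma Lam_near: assumes "\<eta> > 0" "Lam a \<eta> j x \<noteq> 0" shows "\<bar>x - xg a \<eta> j\<bar> < \<eta>"
  using Lam_zero[OF assms(1)] assms(2) by force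

lemma Lam_sum: "(\<Sum>j<Suc N. Lam a \<eta> j x) = Hs a \<eta> 0 x - Hs a \<eta> (Suc N) x"
  unfolding Lam_def by (rule sum_lessThan_telescope')

lemma Lam_sum_bounds: assumes "\<eta> > 0"
  shows "0 \<le> (\<Sum>j<Suc N. Lam a \<eta> j x)" "(\<Sum>j<Suc N. Lam a \<eta> j x) \<le> 1"
proof -
  show "0 \<le> (\<Sum>j<Suc N. Lam a \<eta> j x)" using Lam_nonneg[OF assms] by (intro sum_nonneg) auto
  show "(\<Sum>j<Suc N. Lam a \<eta> j x) \<le> 1"
    unfolding Lam_sum using Hs_bounds[of a \<eta> 0 x] Hs_bounds[of a \<eta> "Suc N" x] by linarith
qed

lemma Lam_sum_1: assumes "\<eta> > 0" "a \<le> x" "x \<le> a + real N * \<eta>"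
  shows "(\<Sum>j<Suc N. Lam a \<eta> j x) = 1"
proof -
  have "(x - xg a \<eta> 0) / \<eta> \<ge> 0" using assms by (simp add: xg_def)
  then have h0: "Hs a \<eta> 0 x = 1" unfolding Hs_def by auto
  have "x - xg a \<eta> N \<le> 0" using assms by (simp add: xg_def)
  then have "(x - xg a \<eta> N) / \<eta> \<le> 0" using assms by (simp add: divide_le_0_iff)
  then have h1: "Hs a \<eta> (Suc N) x = 0" unfolding Hs_def Hs_Suc_arg[OF assms(1)] by auto
  show ?thesis unfolding Lam_sum using h0 h1 by simp
qed

lemma clamp_lip: "\<bar>max 0 (min 1 u) - max 0 (min 1 v)\<bar> \<le> \<bar>u - v\<bar>" for u v :: real
  by (auto simp: max_def min_def abs_le_iff)

lemma Hs_lip: assumes "\<eta> > 0" shows "\<bar>Hs a \<eta> j x - Hs a \<eta> j y\<bar> \<le> \<bar>x - y\<bar> / \<eta>"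
proof -
  have "\<bar>Hs a \<eta> j x - Hs a \<eta> j y\<bar> \<le> \<bar>((x - xg a \<eta> j) / \<eta> + 1) - ((y - xg a \<eta> j) / \<eta> + 1)\<bar>"
    unfolding Hs_def by (rule clamp_lip)
  also have "((x - xg a \<eta> j) / \<eta> + 1) - ((y - xg a \<eta> j) / \<eta> + 1) = (x - y) / \<eta>"
    by (simp add: diff_divide_distrib)
  also have "\<bar>(x - y) / \<eta>\<bar> = \<bar>x - y\<bar> / \<eta>" using assms by simp
  finally show ?thesis .
qed

lemma Lam_lip: assumes "\<eta> > 0" shows "\<bar>Lam a \<eta> j x - Lam a \<eta> j y\<bar> \<le> (2 / \<eta>) * \<bar>x - y\<bar>"
proof -
  have "\<bar>Lam a \<eta> j x - Lam a \<eta> j y\<bar> \<le> \<bar>Hs a \<eta> j x - Hs a \<eta> j y\<bar> + \<bar>Hs a \<eta> (Suc j) x - Hs a \<eta> (Suc j) y\<bar>"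
    unfolding Lam_def by linarith
  also have "\<dots> \<le> \<bar>x - y\<bar> / \<eta> + \<bar>x - y\<bar> / \<eta>" using Hs_lip[OF assms] by (intro add_mono) auto
  finally show ?thesis by simp
qed

lemma Lam_cont: assumes "\<eta> > 0" shows "continuous_on UNIV (Lam a \<eta> j)"
  unfolding Lam_def[abs_def] Hs_def by (intro continuous_intros) (use assms in auto)

lemma interp_pt:
  fixes f :: "real \<Rightarrow> real"
  assumes eta: "\<eta> > 0"
    and out: "\<And>x. x < a \<or> x > a + real N * \<eta> \<Longrightarrow> f x = 0"
    and near: "\<And>j x. j \<le> N \<Longrightarrow> \<bar>x - xg a \<eta> j\<bar> < \<eta> \<Longrightarrow> \<bar>f x - f (xg a \<eta> j)\<bar> \<le> e"
    and e0: "e \<ge> 0"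
  shows "\<bar>f x - (\<Sum>j<Suc N. f (xg a \<eta> j) * Lam a \<eta> j x)\<bar> \<le> e"
proof -
  let ?S = "\<Sum>j<Suc N. Lam a \<eta> j x"
  have eq: "f x - (\<Sum>j<Suc N. f (xg a \<eta> j) * Lam a \<eta> j x)
      = f x * (1 - ?S) + (\<Sum>j<Suc N. (f x - f (xg a \<eta> j)) * Lam a \<eta> j x)"
    by (simp add: algebra_simps sum_distrib_left sum_subtractf)
  have z: "f x * (1 - ?S) = 0"
  proof (cases "a \<le> x \<and> x \<le> a + real N * \<eta>")
    case True then show ?thesis using Lam_sum_1[OF eta] by simp
  next
    case False then show ?thesis using out by force
  qed
  have "\<bar>\<Sum>j<Suc N. (f x - f (xg a \<eta> j)) * Lam a \<eta> j x\<bar> \<le> (\<Sum>j<Suc N. \<bar>(f x - f (xg a \<eta> j)) * Lam a \<eta> j x\<bar>)"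
    by (rule sum_abs)
  also have "\<dots> \<le> (\<Sum>j<Suc N. e * Lam a \<eta> j x)"
  proof (rule sum_mono)
    fix j assume j: "j \<in> {..<Suc N}"
    show "\<bar>(f x - f (xg a \<eta> j)) * Lam a \<eta> j x\<bar> \<le> e * Lam a \<eta> j x"
    proof (cases "Lam a \<eta> j x = 0")
      case True then show ?thesis by simp
    next
      case False
      then have "\<bar>f x - f (xg a \<eta> j)\<bar> \<le> e" using near[of j x] Lam_near[OF eta False] j by auto
      then show ?thesis using Lam_nonneg[OF eta, of a j x]
        by (simp add: abs_mult mult_right_mono)
    qed
  qed
  also have "\<dots> = e * ?S" by (rule sum_distrib_left[symmetric])
  also have "\<dots> \<le> e" using Lam_sum_bounds(2)[OF eta, where N=N and a=a and x=x] e0 by (simp add: mult_left_le)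
  finally show ?thesis by (simp only: eq z add_0_left)
qed



definition wR :: "real \<Rightarrow> real \<Rightarrow> real \<Rightarrow> real" where
  "wR p R t = max 0 (phip p t - R powr p)"
definition chi :: "real \<Rightarrow> real \<Rightarrow> real \<Rightarrow> real" where
  "chi p R t = 1 - min 1 (wR p R t / R powr p)"

lemma wR_nonneg: "0 \<le> wR p R t" unfolding wR_def by simp
lemma wR_le_phip: "wR p R t \<le> phip p t" unfolding wR_def using phip_nonneg[of p t] by simp

lemma wR_cont: assumes "p \<ge> 1" shows "continuous_on UNIV (wR p R)"
  unfolding wR_def[abs_def] by (intro continuous_intros phip_cont[OF assms])

lemma wR_Fp: assumes "p \<ge> 1" shows "(\<lambda>t. wR p R t / p) \<in> Fp p"
  unfolding Fp_def
proof safe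
  fix x y
  have "\<bar>wR p R x - wR p R y\<bar> \<le> \<bar>phip p x - phip p y\<bar>"
    unfolding wR_def by (auto simp: max_def abs_le_iff)
  also have "\<dots> \<le> p * cp p x y * \<bar>x - y\<bar>" by (rule phip_lip[OF assms])
  finally have "\<bar>wR p R x - wR p R y\<bar> / p \<le> cp p x y * \<bar>x - y\<bar>"
    using assms by (simp add: divide_le_eq mult.commute mult.left_commute)
  moreover have "\<bar>wR p R x / p - wR p R y / p\<bar> = \<bar>wR p R x - wR p R y\<bar> / p"
    using assms by (simp add: diff_divide_distrib[symmetric])
  ultimately show "\<bar>wR p R x / p - wR p R y / p\<bar> \<le> cp p x y * \<bar>x - y\<bar>" by simp
qed

lemma chi_bounds: assumes "R \<ge> 1" shows "0 \<le> chi p R t" "chi p R t \<le> 1"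
proof -
  have "0 \<le> wR p R t / R powr p" using wR_nonneg assms by simp
  then show "0 \<le> chi p R t" "chi p R t \<le> 1" unfolding chi_def by auto
qed

lemma chi_cont: assumes "p \<ge> 1" "R \<ge> 1" shows "continuous_on UNIV (chi p R)"
  unfolding chi_def[abs_def] using assms
  by (intro continuous_intros wR_cont[OF assms(1)]) auto

lemma two_powr: assumes "p \<ge> 1" shows "2 \<le> (2::real) powr p"
  using powr_mono[of 1 p 2] assms by simp

lemma chi_zero: assumes "p \<ge> 1" "R \<ge> 1" "\<bar>t\<bar> \<ge> 2 * R" shows "chi p R t = 0"
proof -
  have t1: "\<not> \<bar>t\<bar> \<le> 1" using assms by linarith
  have "(2 * R) powr p \<le> \<bar>t\<bar> powr p" by (rule powr_mono2) (use assms in auto)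
  moreover have "(2 * R) powr p = 2 powr p * R powr p" using assms by (simp add: powr_mult)
  moreover have "2 * R powr p \<le> 2 powr p * R powr p"
    using two_powr[OF assms(1)] by (intro mult_right_mono) auto
  ultimately have "2 * R powr p \<le> phip p t" using t1 by (simp add: phip_def)
  then have "R powr p \<le> wR p R t" unfolding wR_def by linarith
  then have "1 \<le> wR p R t / R powr p" using assms(2) by (simp add: le_divide_eq)
  then show ?thesis unfolding chi_def by simp
qed

lemma tail_bound: assumes "R \<ge> 1" "p \<ge> 1" shows "(phip p t + 1) * (1 - chi p R t) \<le> 3 * wR p R t"
proof -
  have R1: "1 \<le> R powr p" using ge_one_powr_ge_zero[of R p] assms by simp
  have c: "1 - chi p R t = min 1 (wR p R t / R powr p)" by (simp add: chi_def)
  show ?thesis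
  proof (cases "wR p R t \<ge> R powr p")
    case True
    then have "1 \<le> wR p R t / R powr p" using R1 by (subst le_divide_eq) auto
    then have "min 1 (wR p R t / R powr p) = 1" by simp
    moreover have "phip p t \<le> wR p R t + R powr p" unfolding wR_def by simp
    ultimately show ?thesis using c True R1 by simp
  next
    case False
    then have m: "min 1 (wR p R t / R powr p) = wR p R t / R powr p" using R1 wR_nonneg[of p R t]
      by (simp add: divide_le_eq)
    show ?thesis
    proof (cases "wR p R t = 0")
      case True then show ?thesis using c m by simp
    next
      case False2: False
      then have "wR p R t = phip p t - R powr p" unfolding wR_def by (auto simp: max_def split: if_splits)
      then have "phip p t + 1 \<le> 3 * R powr p" using False R1 by linarith
      then have "(phip p t + 1) * (wR p R t / R powr p) \<le> (3 * R powr p) * (wR p R t / R powr p)"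
        using wR_nonneg[of p R t] R1 by (intro mult_right_mono) auto
      also have "\<dots> = 3 * wR p R t"
      proof -
        have nz: "R powr p \<noteq> 0" using R1 by auto
        show ?thesis using nz by (simp add: field_simps)
      qed
      finally show ?thesis using c m by simp
    qed
  qed
qed

lemma phip_le_B: assumes "p \<ge> 1" "B \<ge> 1" "\<bar>t\<bar> \<le> B" shows "phip p t \<le> B powr p"
proof (cases "\<bar>t\<bar> \<le> 1")
  case True
  then have "phip p t \<le> 1" by (simp add: phip_def)
  also have "1 \<le> B powr p" using ge_one_powr_ge_zero[of B p] assms by simp
  finally show ?thesis .
next
  case False
  then show ?thesis using powr_mono2[of p "\<bar>t\<bar>" B] assms by (simp add: phip_def)
qed

lemma wR_small:
  assumes "p \<ge> 1" "P \<in> M1 (phip p)" "\<delta> > 0"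
  shows "\<exists>R\<ge>1. (\<integral>x. wR p R x \<partial>P) < \<delta>"
proof -
  have sP: "sets P = sets borel" using M1D(2)[OF assms(2)] .
  have lim: "(\<lambda>n. \<integral>x. wR p (real n + 1) x \<partial>P) \<longlonglongrightarrow> (\<integral>x. 0 \<partial>P)"
  proof (rule integral_dominated_convergence[where w="phip p"])
    show "(\<lambda>x. 0::real) \<in> borel_measurable P" by simp
    show "\<And>n. wR p (real n + 1) \<in> borel_measurable P" using cont_meas[OF wR_cont[OF assms(1)] sP] .
    show "integrable P (phip p)" using M1_int_phi[OF assms(1,2)] .
    show "AE x in P. (\<lambda>n. wR p (real n + 1) x) \<longlonglongrightarrow> 0"
    proof (rule AE_I2)
      fix x
      obtain n0 :: nat where n0: "phip p x \<le> real n0" using real_arch_simple by blast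
      have "wR p (real n + 1) x = 0" if "n \<ge> n0" for n
      proof -
        have "real n + 1 \<le> (real n + 1) powr p"
          using powr_mono[of 1 p "real n + 1"] assms(1) by simp
        moreover have "real n0 \<le> real n" using that by simp
        ultimately have "phip p x - (real n + 1) powr p \<le> 0" using n0 by linarith
        then show ?thesis unfolding wR_def by (simp add: max_def)
      qed
      note zz = this
      have "eventually (\<lambda>n. wR p (real n + 1) x = 0) sequentially"
        by (rule eventually_sequentiallyI[of n0]) (rule zz)
      then show "(\<lambda>n. wR p (real n + 1) x) \<longlonglongrightarrow> 0" by (rule tendsto_eventually)
    qed
    show "\<And>n. AE x in P. norm (wR p (real n + 1) x) \<le> phip p x"
      using wR_nonneg wR_le_phip by simp
  qed
  then obtain n where "\<bar>(\<integral>x. wR p (real n + 1) x \<partial>P)\<bar> < \<delta>"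
    using assms(3) by (auto simp: LIMSEQ_iff)
  then show ?thesis by (intro exI[of _ "real n + 1"]) auto
qed

lemma Lam_int: assumes "p \<ge> 1" "P \<in> M1 (phip p)" "\<eta> > 0" shows "integrable P (Lam a \<eta> j)"
proof -
  have m: "Lam a \<eta> j \<in> borel_measurable P"
    using cont_meas[OF Lam_cont[OF assms(3)] M1D(2)[OF assms(2)]] .
  have b: "\<bar>Lam a \<eta> j t\<bar> \<le> 1 * (phip p t + 1)" for t
    using Lam_nonneg[OF assms(3), of a j t] Lam_le1[OF assms(3), of a j t] phip_nonneg[of p t] by simp
  show ?thesis using M1_int_dom[OF assms(1,2) m b] .
qed

lemma absdiv: fixes A B c d :: real assumes "c > 0" "\<bar>A / c - B / c\<bar> \<le> d" shows "\<bar>A - B\<bar> \<le> c * d"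
proof -
  have "\<bar>A / c - B / c\<bar> = \<bar>A - B\<bar> / c" using assms(1) by (simp add: diff_divide_distrib[symmetric])
  then show ?thesis using assms by (simp add: divide_le_eq mult.commute)
qed

lemma Lam_D: assumes "p \<ge> 1" "P \<in> M1 (phip p)" "Q \<in> M1 (phip p)" "\<eta> > 0"
  shows "\<bar>(\<integral>x. Lam a \<eta> j x \<partial>P) - (\<integral>x. Lam a \<eta> j x \<partial>Q)\<bar> \<le> (2 / \<eta>) * D p P Q"
proof -
  have "(\<lambda>x. Lam a \<eta> j x / (2 / \<eta>)) \<in> Fp p"
    by (rule lip_Fp[OF assms(1)]) (use assms(4) Lam_lip[OF assms(4)] in auto)
  from D_upper[OF assms(1,2,3) this]
  have "\<bar>(\<integral>x. Lam a \<eta> j x \<partial>P) / (2 / \<eta>) - (\<integral>x. Lam a \<eta> j x \<partial>Q) / (2 / \<eta>)\<bar> \<le> D p P Q"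
    by (simp only: integral_divide_zero)
  then show ?thesis by (rule absdiv[rotated]) (use assms(4) in simp)
qed

lemma int_interp:
  fixes f :: "real \<Rightarrow> real"
  assumes p: "p \<ge> 1" and PM: "P \<in> M1 (phip p)" and QM: "Q \<in> M1 (phip p)"
    and eta: "\<eta> > 0" and fc: "continuous_on UNIV f" and fb: "\<And>t. \<bar>f t\<bar> \<le> K"
    and out: "\<And>x. x < a \<or> x > a + real N * \<eta> \<Longrightarrow> f x = 0"
    and near: "\<And>j x. j \<le> N \<Longrightarrow> \<bar>x - xg a \<eta> j\<bar> < \<eta> \<Longrightarrow> \<bar>f x - f (xg a \<eta> j)\<bar> \<le> e"
    and e0: "e \<ge> 0"
  shows "\<bar>(\<integral>x. f x \<partial>P) - (\<integral>x. f x \<partial>Q)\<bar>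
     \<le> 2 * e + (\<Sum>j<Suc N. \<bar>f (xg a \<eta> j)\<bar> * \<bar>(\<integral>x. Lam a \<eta> j x \<partial>P) - (\<integral>x. Lam a \<eta> j x \<partial>Q)\<bar>)"
proof -
  define g where "g x = (\<Sum>j<Suc N. f (xg a \<eta> j) * Lam a \<eta> j x)" for x
  have K0: "K \<ge> 0" using fb[of 0] by linarith
  have fint: "integrable M f" if "M \<in> M1 (phip p)" for M
    by (rule M1_int_dom[OF p that cont_meas[OF fc M1D(2)[OF that]], of K])
      (use fb K0 phip_nonneg in \<open>auto intro: order_trans[OF _ mult_left_mono[of 1]]\<close>)
  have gint: "integrable M g" and gval: "(\<integral>x. g x \<partial>M) = (\<Sum>j<Suc N. f (xg a \<eta> j) * (\<integral>x. Lam a \<eta> j x \<partial>M))"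
    if "M \<in> M1 (phip p)" for M
  proof -
    show "integrable M g" unfolding g_def[abs_def]
      using Lam_int[OF p that eta] by auto
    show "(\<integral>x. g x \<partial>M) = (\<Sum>j<Suc N. f (xg a \<eta> j) * (\<integral>x. Lam a \<eta> j x \<partial>M))"
      unfolding g_def
      by (subst Bochner_Integration.integral_sum) (use Lam_int[OF p that eta] in auto)
  qed
  have close: "\<bar>(\<integral>x. f x \<partial>M) - (\<integral>x. g x \<partial>M)\<bar> \<le> e" if "M \<in> M1 (phip p)" for M
  proof -
    interpret prob_space M using M1D(1)[OF that] .
    have "(\<integral>x. f x \<partial>M) - (\<integral>x. g x \<partial>M) = (\<integral>x. f x - g x \<partial>M)"
      using fint[OF that] gint[OF that] by simp
    also have "\<bar>\<dots>\<bar> \<le> (\<integral>x. e \<partial>M)"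
    proof (rule integral_abs_bound_integral)
      show "integrable M (\<lambda>x. f x - g x)"
        using fint[OF that] gint[OF that] by (rule Bochner_Integration.integrable_diff)
      show "integrable M (\<lambda>x. e)" by simp
      fix x show "\<bar>f x - g x\<bar> \<le> e" unfolding g_def
        by (rule interp_pt[where f=f and a=a and N=N and \<eta>=\<eta> and e=e, OF eta out near e0])
    qed
    also have "\<dots> = e" by (simp add: prob_space)
    finally show ?thesis .
  qed
  have "(\<integral>x. g x \<partial>P) - (\<integral>x. g x \<partial>Q) = (\<Sum>j<Suc N. f (xg a \<eta> j) * ((\<integral>x. Lam a \<eta> j x \<partial>P) - (\<integral>x. Lam a \<eta> j x \<partial>Q)))"
    using gval[OF PM] gval[OF QM] by (simp add: sum_subtractf right_diff_distrib)
  also have "\<bar>\<dots>\<bar> \<le> (\<Sum>j<Suc N. \<bar>f (xg a \<eta> j) * ((\<integral>x. Lam a \<eta> j x \<partial>P) - (\<integral>x. Lam a \<eta> j x \<partial>Q))\<bar>)"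
    by (rule sum_abs)
  also have "\<dots> = (\<Sum>j<Suc N. \<bar>f (xg a \<eta> j)\<bar> * \<bar>(\<integral>x. Lam a \<eta> j x \<partial>P) - (\<integral>x. Lam a \<eta> j x \<partial>Q)\<bar>)"
    by (simp add: abs_mult)
  finally have "\<bar>(\<integral>x. g x \<partial>P) - (\<integral>x. g x \<partial>Q)\<bar> \<le> \<dots>" .
  then show ?thesis using close[OF PM] close[OF QM] by linarith
qed



lemma unif_cont_ball:
  fixes f :: "real \<Rightarrow> real"
  assumes "continuous_on UNIV f" "e > 0"
  shows "\<exists>d>0. \<forall>x y. \<bar>x\<bar> \<le> B \<longrightarrow> \<bar>y\<bar> \<le> B \<longrightarrow> \<bar>x - y\<bar> < d \<longrightarrow> \<bar>f x - f y\<bar> < e"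
proof -
  have "uniformly_continuous_on (cball 0 B) f"
    by (rule compact_uniformly_continuous) (use assms(1) continuous_on_subset in auto)
  then obtain d where d: "d > 0" "\<And>x x'. x \<in> cball 0 B \<Longrightarrow> x' \<in> cball 0 B \<Longrightarrow> dist x' x < d \<Longrightarrow> dist (f x') (f x) < e"
    using uniformly_continuous_onE[OF _ assms(2)] by metis
  show ?thesis
  proof (intro exI[of _ d] conjI allI impI)
    fix x y :: real assume "\<bar>x\<bar> \<le> B" "\<bar>y\<bar> \<le> B" "\<bar>x - y\<bar> < d"
    then show "\<bar>f x - f y\<bar> < e" using d(2)[of y x] by (simp add: dist_real_def)
  qed (use d in auto)
qed

lemma get_N: assumes "R > 0" "\<eta>0 > 0" shows "\<exists>N::nat. N > 0 \<and> 4 * R / real N < \<eta>0"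
proof -
  obtain n :: nat where n: "4 * R / \<eta>0 < real n" using reals_Archimedean2 by blast
  have npos: "real n > 0" using n assms by (smt (verit) divide_pos_pos)
  then have "4 * R < \<eta>0 * real n" using n assms by (simp add: divide_less_eq mult.commute)
  then have "4 * R / real n < \<eta>0" using npos by (simp add: divide_less_eq mult.commute)
  then show ?thesis using npos by (intro exI[of _ n]) auto
qed

lemma grid_end: assumes "N > 0" shows "- 2 * R + real N * (4 * R / real N) = 2 * R"
  using assms by simp

lemma grid_pt: assumes "N > 0" "R > 0" "j \<le> N" shows "\<bar>xg (- 2 * R) (4 * R / real N) j\<bar> \<le> 2 * R"
proof -
  have "real j / real N \<le> 1" "0 \<le> real j / real N" using assms by auto
  moreover have "xg (- 2 * R) (4 * R / real N) j = - 2 * R + 4 * R * (real j / real N)"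
    by (simp add: xg_def)
  moreover have "4 * R * (real j / real N) \<le> 4 * R"
    using \<open>real j / real N \<le> 1\<close> assms(2) by (intro mult_left_le) auto
  moreover have "0 \<le> 4 * R * (real j / real N)"
    using \<open>0 \<le> real j / real N\<close> assms(2) by simp
  ultimately show ?thesis by (simp only: abs_le_iff) linarith
qed

lemma wR_int: assumes "p \<ge> 1" "M \<in> M1 (phip p)" shows "integrable M (wR p R)"
proof -
  have m: "wR p R \<in> borel_measurable M" using cont_meas[OF wR_cont[OF assms(1)] M1D(2)[OF assms(2)]] .
  have b: "\<bar>wR p R t\<bar> \<le> 1 * (phip p t + 1)" for t using wR_nonneg[of p R t] wR_le_phip[of p R t] by simp
  show ?thesis using M1_int_dom[OF assms(1,2) m b] .
qed

lemma wR_D: assumes "p \<ge> 1" "P \<in> M1 (phip p)" "Q \<in> M1 (phip p)"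
  shows "(\<integral>x. wR p R x \<partial>Q) \<le> (\<integral>x. wR p R x \<partial>P) + p * D p P Q"
proof -
  have "\<bar>(\<integral>x. wR p R x \<partial>P) / p - (\<integral>x. wR p R x \<partial>Q) / p\<bar> \<le> D p P Q"
    using D_upper[OF assms wR_Fp[OF assms(1)]] by (simp only: integral_divide_zero)
  then have "\<bar>(\<integral>x. wR p R x \<partial>P) - (\<integral>x. wR p R x \<partial>Q)\<bar> \<le> p * D p P Q"
    by (rule absdiv[rotated]) (use assms(1) in simp)
  then show ?thesis by linarith
qed

lemma tail_int:
  assumes p: "p \<ge> 1" and R: "R \<ge> 1" and M: "M \<in> M1 (phip p)" and gc: "continuous_on UNIV g"
    and c: "c \<ge> 0" and gb: "\<And>t. \<bar>g t\<bar> \<le> c * (phip p t + 1)"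
  shows "integrable M (\<lambda>t. g t * (1 - chi p R t))"
    "\<bar>\<integral>t. g t * (1 - chi p R t) \<partial>M\<bar> \<le> 3 * c * (\<integral>x. wR p R x \<partial>M)"
proof -
  have pt: "\<bar>g t * (1 - chi p R t)\<bar> \<le> 3 * c * wR p R t" for t
  proof -
    have "\<bar>g t * (1 - chi p R t)\<bar> = \<bar>g t\<bar> * (1 - chi p R t)"
      using chi_bounds[OF R] by (simp add: abs_mult)
    also have "\<dots> \<le> c * (phip p t + 1) * (1 - chi p R t)"
      using chi_bounds[OF R] gb by (intro mult_right_mono) auto
    also have "\<dots> \<le> c * (3 * wR p R t)"
      using tail_bound[OF R p, of t] c by (simp add: mult.assoc mult_left_mono)
    finally show ?thesis by simp
  qed
  have m: "(\<lambda>t. g t * (1 - chi p R t)) \<in> borel_measurable M"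
    by (rule cont_meas[OF _ M1D(2)[OF M]]) (intro continuous_intros gc chi_cont[OF p R])
  have b: "\<bar>g t * (1 - chi p R t)\<bar> \<le> (3 * c) * (phip p t + 1)" for t
    using pt[of t] wR_le_phip[of p R t] c by (smt (verit) mult_left_mono)
  show i: "integrable M (\<lambda>t. g t * (1 - chi p R t))" using M1_int_dom[OF p M m b] .
  have "\<bar>\<integral>t. g t * (1 - chi p R t) \<partial>M\<bar> \<le> (\<integral>t. 3 * c * wR p R t \<partial>M)"
    using i wR_int[OF p M] pt by (intro integral_abs_bound_integral) auto
  also have "\<dots> = 3 * c * (\<integral>x. wR p R x \<partial>M)" by simp
  finally show "\<bar>\<integral>t. g t * (1 - chi p R t) \<partial>M\<bar> \<le> 3 * c * (\<integral>x. wR p R x \<partial>M)" .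
qed

lemma split_int:
  assumes p: "p \<ge> 1" and R: "R \<ge> 1" and M: "M \<in> M1 (phip p)" and gc: "continuous_on UNIV g"
    and c: "c \<ge> 0" and gb: "\<And>t. \<bar>g t\<bar> \<le> c * (phip p t + 1)"
  shows "(\<integral>t. g t \<partial>M) = (\<integral>t. g t * chi p R t \<partial>M) + (\<integral>t. g t * (1 - chi p R t) \<partial>M)"
proof -
  have gi: "integrable M g" using M1_int_dom[OF p M cont_meas[OF gc M1D(2)[OF M]] gb] .
  have ti: "integrable M (\<lambda>t. g t * (1 - chi p R t))" by (rule tail_int(1)[OF assms])
  have "(\<lambda>t. g t * chi p R t) = (\<lambda>t. g t - g t * (1 - chi p R t))" by (auto simp: algebra_simps)
  then have "(\<integral>t. g t * chi p R t \<partial>M) = (\<integral>t. g t \<partial>M) - (\<integral>t. g t * (1 - chi p R t) \<partial>M)"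
    using gi ti by simp
  then show ?thesis by simp
qed



lemma sub_open:
  assumes "continuous_on UNIV h" "c > 0" "\<And>t. \<bar>h t\<bar> \<le> c * (phip p t + 1)" "open V"
  shows "openin (phi_weak_topology (phip p)) {Q \<in> M1 (phip p). (\<integral>x. h x \<partial>Q) \<in> V}"
  unfolding phi_weak_topology_def by (rule topology_generated_by_Basis) (use assms in blast)

lemma int_shift: assumes "p \<ge> 1" "M \<in> M1 (phip p)" "\<psi> \<in> Fp p"
  shows "(\<integral>t. \<psi> t - \<psi> 0 \<partial>M) = (\<integral>t. \<psi> t \<partial>M) - \<psi> 0"
proof -
  interpret prob_space M using M1D(1)[OF assms(2)] .
  show ?thesis using Fp_int[OF assms] by (simp add: prob_space)
qed

lemma nbhd_exists:
  assumes p: "p \<ge> 1" and PM: "P \<in> M1 (phip p)" and eps: "\<epsilon> > 0"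
  shows "\<exists>Nb. openin (phi_weak_topology (phip p)) Nb \<and> P \<in> Nb \<and> (\<forall>Q\<in>Nb. Q \<in> M1 (phip p) \<and> D p P Q < \<epsilon>)"
proof -
  define \<delta>0 where "\<delta>0 = \<epsilon> / 16"
  have d0: "\<delta>0 > 0" using eps by (simp add: \<delta>0_def)
  obtain R where R: "R \<ge> 1" "(\<integral>x. wR p R x \<partial>P) < \<delta>0" using wR_small[OF p PM d0] by blast
  define B where "B = 2 * R + 1"
  define Bp where "Bp = B powr p"
  define Bq where "Bq = B powr (p - 1)"
  have B1: "B \<ge> 1" using R by (simp add: B_def)
  have Bp1: "Bp \<ge> 1" unfolding Bp_def using ge_one_powr_ge_zero[OF B1] p by simp
  have Bq1: "Bq \<ge> 1" unfolding Bq_def using ge_one_powr_ge_zero[OF B1] p by simp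
  obtain d1 where d1: "d1 > 0" "\<And>x y. \<bar>x\<bar> \<le> B \<Longrightarrow> \<bar>y\<bar> \<le> B \<Longrightarrow> \<bar>x - y\<bar> < d1 \<Longrightarrow> \<bar>chi p R x - chi p R y\<bar> < \<delta>0 / Bp"
    using unif_cont_ball[OF chi_cont[OF p R(1)], of "\<delta>0 / Bp" B] d0 Bp1 by auto
  define \<eta>0 where "\<eta>0 = min 1 (min d1 (\<delta>0 / Bq))"
  have eta0: "\<eta>0 > 0" using d1 d0 Bq1 by (simp add: \<eta>0_def)
  obtain N :: nat where N: "N > 0" "4 * R / real N < \<eta>0" using get_N[of R \<eta>0] R(1) eta0 by auto
  define \<eta> where "\<eta> = 4 * R / real N"
  define a where "a = - 2 * R"
  have eta: "\<eta> > 0" using N R by (simp add: \<eta>_def)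
  have eta1: "\<eta> \<le> 1" "\<eta> < d1" "\<eta> < \<delta>0 / Bq" using N(2) by (auto simp: \<eta>_def \<eta>0_def)
  have aN: "a + real N * \<eta> = 2 * R" unfolding a_def \<eta>_def using grid_end[OF N(1)] by simp
  have xj: "\<bar>xg a \<eta> j\<bar> \<le> 2 * R" if "j \<le> N" for j
    unfolding a_def \<eta>_def using grid_pt[OF N(1) _ that] R by simp
  define \<delta>1 where "\<delta>1 = \<delta>0 / (real (Suc N) * Bp)"
  have d1pos: "\<delta>1 > 0" using d0 Bp1 by (simp add: \<delta>1_def)
  have sumd: "real (Suc N) * (Bp * \<delta>1) = \<delta>0" using Bp1 by (simp add: \<delta>1_def)
  define T where "T = phi_weak_topology (phip p)"
  define U0 where "U0 = {Q \<in> M1 (phip p). (\<integral>x. wR p R x \<partial>Q) \<in> {..< (\<integral>x. wR p R x \<partial>P) + \<delta>0}}"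
  define U where "U j = {Q \<in> M1 (phip p). (\<integral>x. Lam a \<eta> j x \<partial>Q) \<in> ball (\<integral>x. Lam a \<eta> j x \<partial>P) \<delta>1}" for j
  define Nb where "Nb = U0 \<inter> (\<Inter>j\<in>{..<Suc N}. U j)"
  have oU0: "openin T U0" unfolding T_def U0_def
  proof (rule sub_open[OF wR_cont[OF p], of 1])
    fix t show "\<bar>wR p R t\<bar> \<le> 1 * (phip p t + 1)" using wR_nonneg[of p R t] wR_le_phip[of p R t] by simp
  qed auto
  have oU: "openin T (U j)" for j unfolding T_def U_def
  proof (rule sub_open[OF Lam_cont[OF eta], of 1])
    fix t show "\<bar>Lam a \<eta> j t\<bar> \<le> 1 * (phip p t + 1)"
      using Lam_nonneg[OF eta, of a j t] Lam_le1[OF eta, of a j t] phip_nonneg[of p t] by simp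
  qed auto
  have oNb: "openin T Nb" unfolding Nb_def
    by (intro openin_Int oU0 openin_INT2) (auto intro: oU)
  have PNb: "P \<in> Nb" unfolding Nb_def U0_def U_def using PM d0 d1pos by auto
  have main: "D p P Q \<le> 14 * \<delta>0" if QN: "Q \<in> Nb" for Q
  proof -
    have QM: "Q \<in> M1 (phip p)" using QN by (simp add: Nb_def U0_def)
    have wQ: "(\<integral>x. wR p R x \<partial>Q) < (\<integral>x. wR p R x \<partial>P) + \<delta>0" using QN by (simp add: Nb_def U0_def)
    have lamQ: "\<bar>(\<integral>x. Lam a \<eta> j x \<partial>P) - (\<integral>x. Lam a \<eta> j x \<partial>Q)\<bar> < \<delta>1" if "j < Suc N" for j
      using QN that by (auto simp: Nb_def U_def dist_real_def)
    show ?thesis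
    proof (rule D_least[OF p PM QM])
      fix \<psi> assume F: "\<psi> \<in> Fp p"
      define g where "g t = \<psi> t - \<psi> 0" for t
      have gc: "continuous_on UNIV g" unfolding g_def[abs_def]
        by (intro continuous_intros Fp_cont[OF p F])
      have gphi: "\<bar>g t\<bar> \<le> phip p t" for t unfolding g_def using Fp_phi[OF p F] .
      have gb: "\<bar>g t\<bar> \<le> 1 * (phip p t + 1)" for t using gphi[of t] by simp
      define f where "f t = g t * chi p R t" for t
      have fc: "continuous_on UNIV f" unfolding f_def[abs_def]
        by (intro continuous_intros gc chi_cont[OF p R(1)])
      have chi_small: "\<bar>t\<bar> < 2 * R" if "chi p R t \<noteq> 0" for t
        using chi_zero[OF p R(1), of t] that by linarith
      have fb: "\<bar>f t\<bar> \<le> Bp" for t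
      proof (cases "chi p R t = 0")
        case True then show ?thesis using Bp1 by (simp add: f_def)
      next
        case False
        then have "\<bar>t\<bar> \<le> B" using chi_small[of t] by (simp add: B_def)
        then have "\<bar>g t\<bar> \<le> Bp" using gphi[of t] phip_le_B[OF p B1] by (force simp: Bp_def)
        moreover have "\<bar>f t\<bar> \<le> \<bar>g t\<bar>" using chi_bounds[OF R(1), of p t]
          by (simp add: f_def abs_mult mult_left_le)
        ultimately show ?thesis by simp
      qed
      have out: "f x = 0" if "x < a \<or> x > a + real N * \<eta>" for x
      proof -
        have "\<bar>x\<bar> \<ge> 2 * R" using that aN by (auto simp: a_def)
        then show ?thesis using chi_zero[OF p R(1)] by (simp add: f_def)
      qed
      have near: "\<bar>f x - f (xg a \<eta> j)\<bar> \<le> 2 * \<delta>0" if j: "j \<le> N" "\<bar>x - xg a \<eta> j\<bar> < \<eta>" for j x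
      proof -
        define y where "y = xg a \<eta> j"
        have yB: "\<bar>y\<bar> \<le> B" using xj[OF j(1)] by (simp add: y_def B_def)
        have xB: "\<bar>x\<bar> \<le> B" using xj[OF j(1)] j(2) eta1(1) by (simp add: y_def B_def)
        have xy: "\<bar>x - y\<bar> < \<eta>" using j(2) by (simp add: y_def)
        have id: "f x - f y = (\<psi> x - \<psi> y) * chi p R x + g y * (chi p R x - chi p R y)"
          by (simp add: f_def g_def algebra_simps)
        have "\<bar>\<psi> x - \<psi> y\<bar> \<le> cp p x y * \<bar>x - y\<bar>" by (rule FpD[OF F])
        also have "\<dots> \<le> Bq * \<bar>x - y\<bar>"
          using cp_le[OF p xB yB B1] by (simp add: Bq_def mult_right_mono)
        also have "\<dots> \<le> Bq * (\<delta>0 / Bq)" using xy eta1(3) Bq1 by (intro mult_left_mono) auto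
        also have "\<dots> = \<delta>0" using Bq1 by simp
        finally have t1: "\<bar>\<psi> x - \<psi> y\<bar> \<le> \<delta>0" .
        have t1': "\<bar>(\<psi> x - \<psi> y) * chi p R x\<bar> \<le> \<delta>0"
          using t1 chi_bounds[OF R(1), of p x] by (simp add: abs_mult) (smt (verit) mult_left_le)
        have gy: "\<bar>g y\<bar> \<le> Bp" using gphi[of y] phip_le_B[OF p B1 yB] by (simp add: Bp_def)
        have cxy: "\<bar>chi p R x - chi p R y\<bar> \<le> \<delta>0 / Bp"
          using d1(2)[OF xB yB] xy eta1(2) by force
        have "\<bar>g y * (chi p R x - chi p R y)\<bar> \<le> Bp * (\<delta>0 / Bp)"
          unfolding abs_mult using gy cxy by (intro mult_mono) auto
        also have "\<dots> = \<delta>0" using Bp1 by simp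
        finally have t2: "\<bar>g y * (chi p R x - chi p R y)\<bar> \<le> \<delta>0" .
        show ?thesis unfolding y_def[symmetric] id using t1' t2 by linarith
      qed
      have fint: "\<bar>(\<integral>x. f x \<partial>P) - (\<integral>x. f x \<partial>Q)\<bar>
          \<le> 2 * (2 * \<delta>0) + (\<Sum>j<Suc N. \<bar>f (xg a \<eta> j)\<bar> * \<bar>(\<integral>x. Lam a \<eta> j x \<partial>P) - (\<integral>x. Lam a \<eta> j x \<partial>Q)\<bar>)"
        by (rule int_interp[OF p PM QM eta fc fb out near]) (use d0 in auto)
      have "(\<Sum>j<Suc N. \<bar>f (xg a \<eta> j)\<bar> * \<bar>(\<integral>x. Lam a \<eta> j x \<partial>P) - (\<integral>x. Lam a \<eta> j x \<partial>Q)\<bar>)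
          \<le> (\<Sum>j<Suc N. Bp * \<delta>1)"
        using fb lamQ Bp1 by (intro sum_mono mult_mono) (auto intro: less_imp_le)
      also have "\<dots> = \<delta>0" using sumd by simp
      finally have fint2: "\<bar>(\<integral>x. f x \<partial>P) - (\<integral>x. f x \<partial>Q)\<bar> \<le> 5 * \<delta>0" using fint by linarith
      have tP: "\<bar>\<integral>t. g t * (1 - chi p R t) \<partial>P\<bar> \<le> 3 * 1 * (\<integral>x. wR p R x \<partial>P)"
        by (rule tail_int(2)[OF p R(1) PM gc _ gb]) simp
      have tQ: "\<bar>\<integral>t. g t * (1 - chi p R t) \<partial>Q\<bar> \<le> 3 * 1 * (\<integral>x. wR p R x \<partial>Q)"
        by (rule tail_int(2)[OF p R(1) QM gc _ gb]) simp
      have sP: "(\<integral>t. g t \<partial>P) = (\<integral>t. f t \<partial>P) + (\<integral>t. g t * (1 - chi p R t) \<partial>P)"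
        unfolding f_def by (rule split_int[OF p R(1) PM gc _ gb]) simp
      have sQ: "(\<integral>t. g t \<partial>Q) = (\<integral>t. f t \<partial>Q) + (\<integral>t. g t * (1 - chi p R t) \<partial>Q)"
        unfolding f_def by (rule split_int[OF p R(1) QM gc _ gb]) simp
      have shift: "(\<integral>t. \<psi> t \<partial>P) - (\<integral>t. \<psi> t \<partial>Q) = (\<integral>t. g t \<partial>P) - (\<integral>t. g t \<partial>Q)"
        unfolding g_def using int_shift[OF p PM F] int_shift[OF p QM F] by simp
      show "\<bar>(\<integral>t. \<psi> t \<partial>P) - (\<integral>t. \<psi> t \<partial>Q)\<bar> \<le> 14 * \<delta>0"
        unfolding shift sP sQ using fint2 tP tQ wQ R(2) by linarith
    qed
  qed
  show ?thesis
  proof (intro exI[of _ Nb] conjI ballI)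
    show "openin (phi_weak_topology (phip p)) Nb" using oNb by (simp add: T_def)
    show "P \<in> Nb" by fact
    fix Q assume "Q \<in> Nb"
    then show "Q \<in> M1 (phip p)" by (simp add: Nb_def U0_def)
    show "D p P Q < \<epsilon>" using main[OF \<open>Q \<in> Nb\<close>] d0 by (simp add: \<delta>0_def)
  qed
qed



lemma cont_h:
  assumes p: "p \<ge> 1" and PM: "P \<in> M1 (phip p)" and hc: "continuous_on UNIV h" and c: "c > 0"
    and hb: "\<And>t. \<bar>h t\<bar> \<le> c * (phip p t + 1)" and e0: "\<epsilon> > 0"
  shows "\<exists>r>0. \<forall>Q\<in>M1 (phip p). D p P Q < r \<longrightarrow> \<bar>(\<integral>x. h x \<partial>Q) - (\<integral>x. h x \<partial>P)\<bar> < \<epsilon>"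
proof -
  define \<delta>0 where "\<delta>0 = \<epsilon> / 8"
  have d0: "\<delta>0 > 0" using e0 by (simp add: \<delta>0_def)
  have d03: "\<delta>0 / (3 * c) > 0" using d0 c by simp
  obtain R where R: "R \<ge> 1" "(\<integral>x. wR p R x \<partial>P) < \<delta>0 / (3 * c)" using wR_small[OF p PM d03] by blast
  have wP: "3 * c * (\<integral>x. wR p R x \<partial>P) < \<delta>0" using R(2) c by (simp add: less_divide_eq mult.commute)
  define B where "B = 2 * R + 1"
  define Bp where "Bp = B powr p"
  have B1: "B \<ge> 1" using R by (simp add: B_def)
  have Bp1: "Bp \<ge> 1" unfolding Bp_def using ge_one_powr_ge_zero[OF B1] p by simp
  define f where "f t = h t * chi p R t" for t
  have fc: "continuous_on UNIV f" unfolding f_def[abs_def]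
    by (intro continuous_intros hc chi_cont[OF p R(1)])
  obtain d1 where d1: "d1 > 0" "\<And>x y. \<bar>x\<bar> \<le> B \<Longrightarrow> \<bar>y\<bar> \<le> B \<Longrightarrow> \<bar>x - y\<bar> < d1 \<Longrightarrow> \<bar>f x - f y\<bar> < \<delta>0"
    using unif_cont_ball[OF fc d0, of B] by auto
  define \<eta>0 where "\<eta>0 = min 1 d1"
  have eta0: "\<eta>0 > 0" using d1 by (simp add: \<eta>0_def)
  obtain N :: nat where N: "N > 0" "4 * R / real N < \<eta>0" using get_N[of R \<eta>0] R(1) eta0 by auto
  define \<eta> where "\<eta> = 4 * R / real N"
  define a where "a = - 2 * R"
  have eta: "\<eta> > 0" using N R by (simp add: \<eta>_def)
  have eta1: "\<eta> \<le> 1" "\<eta> < d1" using N(2) by (auto simp: \<eta>_def \<eta>0_def)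
  have aN: "a + real N * \<eta> = 2 * R" unfolding a_def \<eta>_def using grid_end[OF N(1)] by simp
  have xj: "\<bar>xg a \<eta> j\<bar> \<le> 2 * R" if "j \<le> N" for j
    unfolding a_def \<eta>_def using grid_pt[OF N(1) _ that] R by simp
  define K where "K = c * (Bp + 1)"
  have K0: "K \<ge> 0" using c Bp1 by (simp add: K_def)
  have chi_small: "\<bar>t\<bar> < 2 * R" if "chi p R t \<noteq> 0" for t
    using chi_zero[OF p R(1), of t] that by linarith
  have fb: "\<bar>f t\<bar> \<le> K" for t
  proof (cases "chi p R t = 0")
    case True then show ?thesis using K0 by (simp add: f_def)
  next
    case False
    then have "\<bar>t\<bar> \<le> B" using chi_small[of t] by (simp add: B_def)
    then have "phip p t \<le> Bp" using phip_le_B[OF p B1] by (simp add: Bp_def)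
    then have "\<bar>h t\<bar> \<le> K" using hb[of t] c unfolding K_def
      by (smt (verit) mult_left_mono)
    moreover have "\<bar>f t\<bar> \<le> \<bar>h t\<bar>" using chi_bounds[OF R(1), of p t]
      by (simp add: f_def abs_mult mult_left_le)
    ultimately show ?thesis by simp
  qed
  have out: "f x = 0" if "x < a \<or> x > a + real N * \<eta>" for x
  proof -
    have "\<bar>x\<bar> \<ge> 2 * R" using that aN by (auto simp: a_def)
    then show ?thesis using chi_zero[OF p R(1)] by (simp add: f_def)
  qed
  have near: "\<bar>f x - f (xg a \<eta> j)\<bar> \<le> \<delta>0" if j: "j \<le> N" "\<bar>x - xg a \<eta> j\<bar> < \<eta>" for j x
  proof -
    have yB: "\<bar>xg a \<eta> j\<bar> \<le> B" using xj[OF j(1)] by (simp add: B_def)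
    have xB: "\<bar>x\<bar> \<le> B" using xj[OF j(1)] j(2) eta1(1) by (simp add: B_def)
    show ?thesis using d1(2)[OF xB yB] j(2) eta1(2) by force
  qed
  define L where "L = real (Suc N) * K * (2 / \<eta>) + 3 * c * p"
  have L0: "L \<ge> 0" using K0 eta c p by (simp add: L_def)
  define r where "r = \<delta>0 / (L + 1)"
  have r0: "r > 0" using d0 L0 by (simp add: r_def)
  have Lr: "L * r \<le> \<delta>0"
  proof -
    have "L * r = \<delta>0 * (L / (L + 1))" using L0 by (simp add: r_def field_simps)
    also have "\<dots> \<le> \<delta>0 * 1" using L0 d0 by (intro mult_left_mono) auto
    finally show ?thesis by simp
  qed
  show ?thesis
  proof (intro exI[of _ r] conjI ballI impI r0)
    fix Q assume QM: "Q \<in> M1 (phip p)" and DQ: "D p P Q < r"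
    have Dn: "D p P Q \<ge> 0" by (rule D_nonneg)
    have fint: "\<bar>(\<integral>x. f x \<partial>P) - (\<integral>x. f x \<partial>Q)\<bar>
        \<le> 2 * \<delta>0 + (\<Sum>j<Suc N. \<bar>f (xg a \<eta> j)\<bar> * \<bar>(\<integral>x. Lam a \<eta> j x \<partial>P) - (\<integral>x. Lam a \<eta> j x \<partial>Q)\<bar>)"
      by (rule int_interp[OF p PM QM eta fc fb out near]) (use d0 in auto)
    have "(\<Sum>j<Suc N. \<bar>f (xg a \<eta> j)\<bar> * \<bar>(\<integral>x. Lam a \<eta> j x \<partial>P) - (\<integral>x. Lam a \<eta> j x \<partial>Q)\<bar>)
        \<le> (\<Sum>j<Suc N. K * ((2 / \<eta>) * D p P Q))"
      using fb Lam_D[OF p PM QM eta] K0 by (intro sum_mono mult_mono) auto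
    also have "\<dots> = real (Suc N) * K * (2 / \<eta>) * D p P Q" by simp
    finally have fint2: "\<bar>(\<integral>x. f x \<partial>P) - (\<integral>x. f x \<partial>Q)\<bar> \<le> 2 * \<delta>0 + real (Suc N) * K * (2 / \<eta>) * D p P Q"
      using fint by linarith
    have c0: "c \<ge> 0" using c by simp
    have tP: "\<bar>\<integral>t. h t * (1 - chi p R t) \<partial>P\<bar> \<le> 3 * c * (\<integral>x. wR p R x \<partial>P)"
      by (rule tail_int(2)[OF p R(1) PM hc c0 hb])
    have tQ: "\<bar>\<integral>t. h t * (1 - chi p R t) \<partial>Q\<bar> \<le> 3 * c * (\<integral>x. wR p R x \<partial>Q)"
      by (rule tail_int(2)[OF p R(1) QM hc c0 hb])
    have wQ: "3 * c * (\<integral>x. wR p R x \<partial>Q) \<le> 3 * c * (\<integral>x. wR p R x \<partial>P) + 3 * c * p * D p P Q"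
      using wR_D[OF p PM QM, of R] c by (smt (verit) mult_left_mono distrib_left mult.assoc)
    have sP: "(\<integral>t. h t \<partial>P) = (\<integral>t. f t \<partial>P) + (\<integral>t. h t * (1 - chi p R t) \<partial>P)"
      unfolding f_def by (rule split_int[OF p R(1) PM hc c0 hb])
    have sQ: "(\<integral>t. h t \<partial>Q) = (\<integral>t. f t \<partial>Q) + (\<integral>t. h t * (1 - chi p R t) \<partial>Q)"
      unfolding f_def by (rule split_int[OF p R(1) QM hc c0 hb])
    have LD: "L * D p P Q \<le> \<delta>0"
      using Lr mult_left_mono[OF less_imp_le[OF DQ] L0] by linarith
    have "\<bar>(\<integral>x. h x \<partial>Q) - (\<integral>x. h x \<partial>P)\<bar> \<le> 4 * \<delta>0 + L * D p P Q"
      unfolding sP sQ L_def using fint2 tP tQ wQ wP by (simp add: algebra_simps)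
    also have "\<dots> < \<epsilon>" using LD d0 by (simp add: \<delta>0_def)
    finally show "\<bar>(\<integral>x. h x \<partial>Q) - (\<integral>x. h x \<partial>P)\<bar> < \<epsilon>" .
  qed
qed



lemma basis_open_M:
  assumes p: "p \<ge> 1" and hc: "continuous_on UNIV h" and c: "c > 0"
    and hb: "\<And>t. \<bar>h t\<bar> \<le> c * (phip p t + 1)" and V: "open V"
  shows "openin (Metric_space.mtopology (M1 (phip p)) (D p)) {P \<in> M1 (phip p). (\<integral>x. h x \<partial>P) \<in> V}"
proof -
  interpret Metric_space "M1 (phip p)" "D p" by (rule metric_D[OF p])
  show ?thesis unfolding openin_mtopology
  proof (intro conjI allI impI)
    show "{P \<in> M1 (phip p). (\<integral>x. h x \<partial>P) \<in> V} \<subseteq> M1 (phip p)" by auto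
    fix P assume "P \<in> {P \<in> M1 (phip p). (\<integral>x. h x \<partial>P) \<in> V}"
    then have PM: "P \<in> M1 (phip p)" and hV: "(\<integral>x. h x \<partial>P) \<in> V" by auto
    obtain e where e: "e > 0" "ball (\<integral>x. h x \<partial>P) e \<subseteq> V" using V hV open_contains_ball by blast
    obtain r where r: "r > 0" "\<And>Q. Q \<in> M1 (phip p) \<Longrightarrow> D p P Q < r \<Longrightarrow> \<bar>(\<integral>x. h x \<partial>Q) - (\<integral>x. h x \<partial>P)\<bar> < e"
      using cont_h[OF p PM hc c hb e(1)] by blast
    show "\<exists>r>0. mball P r \<subseteq> {P \<in> M1 (phip p). (\<integral>x. h x \<partial>P) \<in> V}"
    proof (intro exI[of _ r] conjI subsetI)
      fix Q assume "Q \<in> mball P r"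
      then have QM: "Q \<in> M1 (phip p)" and DQ: "D p P Q < r" by auto
      have "(\<integral>x. h x \<partial>Q) \<in> ball (\<integral>x. h x \<partial>P) e"
        using r(2)[OF QM DQ] by (simp add: dist_real_def abs_minus_commute)
      then show "Q \<in> {P \<in> M1 (phip p). (\<integral>x. h x \<partial>P) \<in> V}" using e(2) QM by auto
    qed (use r in auto)
  qed
qed

lemma top_eq: assumes p: "p \<ge> 1"
  shows "Metric_space.mtopology (M1 (phip p)) (D p) = phi_weak_topology (phip p)"
proof -
  interpret Metric_space "M1 (phip p)" "D p" by (rule metric_D[OF p])
  show ?thesis unfolding topology_eq
  proof (intro allI iffI)
    fix S assume S: "openin mtopology S"
    show "openin (phi_weak_topology (phip p)) S"
    proof (subst openin_subopen, intro ballI)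
      fix P assume PS: "P \<in> S"
      have PM: "P \<in> M1 (phip p)" using S PS openin_mtopology by blast
      obtain r where r: "r > 0" "mball P r \<subseteq> S" using S PS openin_mtopology by blast
      obtain Nb where Nb: "openin (phi_weak_topology (phip p)) Nb" "P \<in> Nb"
        "\<And>Q. Q \<in> Nb \<Longrightarrow> Q \<in> M1 (phip p) \<and> D p P Q < r"
        using nbhd_exists[OF p PM r(1)] by blast
      have "Nb \<subseteq> S"
      proof
        fix Q assume "Q \<in> Nb"
        then have "Q \<in> mball P r" using Nb(3) PM by auto
        then show "Q \<in> S" using r(2) by auto
      qed
      then show "\<exists>T. openin (phi_weak_topology (phip p)) T \<and> P \<in> T \<and> T \<subseteq> S" using Nb by blast
    qed
  next
    fix S assume "openin (phi_weak_topology (phip p)) S"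
    then have "generate_topology_on {{P \<in> M1 (phip p). (\<integral>x. h x \<partial>P) \<in> V} | h V.
        continuous_on UNIV h \<and> (\<exists>c>0. \<forall>t. \<bar>h t\<bar> \<le> c * (phip p t + 1)) \<and> open V} S"
      unfolding phi_weak_topology_def by (rule openin_topology_generated_by)
    then show "openin mtopology S"
    proof induct
      case Empty then show ?case by simp
    next
      case (Int a b) then show ?case by (intro openin_Int) auto
    next
      case (UN K) then show ?case by (intro openin_Union) auto
    next
      case (Basis s)
      then obtain h V c where "s = {P \<in> M1 (phip p). (\<integral>x. h x \<partial>P) \<in> V}" "continuous_on UNIV h"
        "c > 0" "\<And>t. \<bar>h t\<bar> \<le> c * (phip p t + 1)" "open V" by blast
      then show ?case using basis_open_M[OF p] by simp
    qed
  qed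
qed

theorem proposition2:
  fixes p :: real
  assumes "p \<ge> 1"
  shows "(Pp p = M1 (phip p) \<and> M1 (phip p) = M1 (\<lambda>t. \<bar>t\<bar> powr p))
    \<and> (\<forall>P\<in>Pp p. \<forall>Q\<in>Pp p.
           dFM p P Q < \<infinity> \<and>
           dphi (phip p) P Q \<le> sqrt (real_of_ereal (dFM p P Q)) + p * real_of_ereal (dFM p P Q))
    \<and> (Metric_space (Pp p) (\<lambda>P Q. real_of_ereal (dFM p P Q)) \<and>
         Metric_space.mtopology (Pp p) (\<lambda>P Q. real_of_ereal (dFM p P Q))
           = phi_weak_topology (phip p))"
proof -
  have r: "real_of_ereal (dFM p P Q) = D p P Q" for P Q by (simp add: D_def)
  show ?thesis
    unfolding r Pp_eq[OF assms]
    using M1_pow[OF assms] dFM_fin(2)[OF assms] part2[OF assms] metric_D[OF assms] top_eq[OF assms]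
    by auto
qed



end
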